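(* Assume that (H1)-(H2) hold. If $H^1(p,w)$ is dense in $L^2(p)$ and the injection of $H^1(p,w)$ in $L^2(p)$ is compact, then $\widetilde{\mathcal{L}}$ is compact.
   Context: Let $-\infty\le a<b\le\infty$, $p$ a probability density on $]a,b[$ with $p>0$ a.e., $w\in L^1_{\text{loc}}(]a,b[)$ a weight with $w>0$ a.e. and $pw\in L^1_{\text{loc}}$. Let $P(x)=\int_a^x p$, $\bar P=1-P$, $K(x,y)=P(x\wedge y)\bar P(x\vee y)$. $H^1(p,w)$ is the set of weakly differentiable $h\in L^2(p)$ with $h'\in L^2(pw)$, normed by $\|h\|^2_{L^2(p)}+\|h'\|^2_{L^2(pw)}$. $C(p,w)$ is the smallest $C$ with $\mathrm{Var}_p[h]\le C\,\mathbb{E}_p[|h'|^2w]$ for all $h\in H^1(p,w)$. Hypotheses: (H1) $C(p,w)<\infty$; (H2) $L^2(pw)\subset L^1_{\text{loc}}(]a,b[)$. $\widetilde{\mathcal{L}} f(x)=\frac{1}{p(x)w(x)}\int_a^b K(x,y)f(y)\,dy$, acting on $E^2(p,w)=L^2(pw)$. *)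

theory Defs
  imports "HOL-Analysis.Analysis"
begin

definition ival :: "ereal \<Rightarrow> ereal \<Rightarrow> real set" where
  "ival a b = {x. a < ereal x \<and> ereal x < b}"

definition loc_integrable :: "real set \<Rightarrow> (real \<Rightarrow> real) \<Rightarrow> bool" where
  "loc_integrable U f \<longleftrightarrow> (\<forall>K. compact K \<and> K \<subseteq> U \<longrightarrow> set_integrable lborel K f)"

definition test_fun :: "real set \<Rightarrow> (real \<Rightarrow> real) \<Rightarrow> bool" where
  "test_fun U \<phi> \<longleftrightarrow> (\<forall>k x. (deriv ^^ k) \<phi> differentiable (at x))
     \<and> compact (closure {x. \<phi> x \<noteq> 0}) \<and> closure {x. \<phi> x \<noteq> 0} \<subseteq> U"

definition weak_deriv :: "real set \<Rightarrow> (real \<Rightarrow> real) \<Rightarrow> (real \<Rightarrow> real) \<Rightarrow> bool" where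
  "weak_deriv U h g \<longleftrightarrow> loc_integrable U h \<and> loc_integrable U g \<and>
     (\<forall>\<phi>. test_fun U \<phi> \<longrightarrow>
        (LINT x:U|lborel. h x * deriv \<phi> x) = - (LINT x:U|lborel. g x * \<phi> x))"

text \<open>Weighted L^2 space L^2(q) on U (as a set of representatives).\<close>
definition L2w :: "real set \<Rightarrow> (real \<Rightarrow> real) \<Rightarrow> (real \<Rightarrow> real) set" where
  "L2w U q = {f. f \<in> borel_measurable lborel \<and> set_integrable lborel U (\<lambda>x. q x * (f x)\<^sup>2)}"

definition nrm2 :: "real set \<Rightarrow> (real \<Rightarrow> real) \<Rightarrow> (real \<Rightarrow> real) \<Rightarrow> real" where
  "nrm2 U q f = (LINT x:U|lborel. q x * (f x)\<^sup>2)"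

definition H1 :: "real set \<Rightarrow> (real \<Rightarrow> real) \<Rightarrow> (real \<Rightarrow> real) \<Rightarrow> (real \<Rightarrow> real) \<Rightarrow> (real \<Rightarrow> real) \<Rightarrow> bool" where
  "H1 U p w h g \<longleftrightarrow> h \<in> L2w U p \<and> weak_deriv U h g \<and> g \<in> L2w U (\<lambda>x. p x * w x)"

definition var_p :: "real set \<Rightarrow> (real \<Rightarrow> real) \<Rightarrow> (real \<Rightarrow> real) \<Rightarrow> real" where
  "var_p U p h = (LINT x:U|lborel. p x * (h x)\<^sup>2) - (LINT x:U|lborel. p x * h x)\<^sup>2"

text \<open>The Poincare constant C(p,w) (the smallest admissible constant, infinity if none).\<close>
definition poincare_const :: "real set \<Rightarrow> (real \<Rightarrow> real) \<Rightarrow> (real \<Rightarrow> real) \<Rightarrow> ereal" where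
  "poincare_const U p w = Inf {ereal C | C. C \<ge> 0 \<and>
     (\<forall>h g. H1 U p w h g \<longrightarrow> var_p U p h \<le> C * nrm2 U (\<lambda>x. p x * w x) g)}"

definition cdf :: "real set \<Rightarrow> (real \<Rightarrow> real) \<Rightarrow> real \<Rightarrow> real" where
  "cdf U p x = (LINT y:{y\<in>U. y \<le> x}|lborel. p y)"

definition kern :: "real set \<Rightarrow> (real \<Rightarrow> real) \<Rightarrow> real \<Rightarrow> real \<Rightarrow> real" where
  "kern U p x y = cdf U p (min x y) * (1 - cdf U p (max x y))"

definition Ltilde :: "real set \<Rightarrow> (real \<Rightarrow> real) \<Rightarrow> (real \<Rightarrow> real) \<Rightarrow> (real \<Rightarrow> real) \<Rightarrow> real \<Rightarrow> real" where
  "Ltilde U p w f x = (LINT y:U|lborel. kern U p x y * f y) / (p x * w x)"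

end

theory Submission
  imports Defs
begin

definition kr :: "real \<Rightarrow> real \<Rightarrow> real \<Rightarrow> real" where
  "kr c x t = (if c \<le> t \<and> t < x then 1 else if x \<le> t \<and> t < c then -1 else 0)"

lemma kr_meas[measurable]:
  assumes [measurable]: "f \<in> borel_measurable M" "g \<in> borel_measurable M"
  shows "(\<lambda>x. kr c (f x) (g x)) \<in> borel_measurable M"
  unfolding kr_def by measurable

lemma abs_kr: "\<bar>kr c x t\<bar> \<le> 1"
  unfolding kr_def by auto

lemma sets_pair_lborel[measurable_cong]: "sets (M \<Otimes>\<^sub>M lborel) = sets (M \<Otimes>\<^sub>M borel)"
  by (rule sets_pair_measure_cong) simp_all

lemma ival_open: "open (ival a b)"
proof -
  have "ival a b = ereal -` {a<..<b}" unfolding ival_def by auto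
  then show ?thesis using continuous_on_ereal[OF continuous_on_id] open_vimage by (metis open_greaterThanLessThan)
qed

lemma ival_meas[measurable]: "ival a b \<in> sets borel"
  using ival_open by simp

lemma ival_conv: "x \<in> ival a b \<Longrightarrow> y \<in> ival a b \<Longrightarrow> x \<le> z \<Longrightarrow> z \<le> y \<Longrightarrow> z \<in> ival a b"
proof -
  assume "x \<in> ival a b" "y \<in> ival a b" "x \<le> z" "z \<le> y"
  then have "a < ereal x" "ereal x \<le> ereal z" "ereal z \<le> ereal y" "ereal y < b" unfolding ival_def by auto
  then have "a < ereal z" "ereal z < b" using less_le_trans le_less_trans by blast+
  then show ?thesis unfolding ival_def by auto
qed

lemma prod_integrable:
  fixes F :: "real \<times> real \<Rightarrow> real"
  assumes Fm[measurable]: "F \<in> borel_measurable (borel \<Otimes>\<^sub>M borel)"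
    and g1: "integrable lborel g1" and g2: "integrable lborel g2"
    and nn1: "\<And>t. g1 t \<ge> 0" and nn2: "\<And>t. g2 t \<ge> 0"
    and bnd: "\<And>t z. \<bar>F (t,z)\<bar> \<le> g1 t * g2 z"
  shows "integrable (lborel \<Otimes>\<^sub>M lborel) F"
proof (rule lborel_pair.Fubini_integrable)
  show "F \<in> borel_measurable (lborel \<Otimes>\<^sub>M lborel)" by simp
  have g1m[measurable]: "g1 \<in> borel_measurable borel" using g1 by auto
  have g2m[measurable]: "g2 \<in> borel_measurable borel" using g2 by auto
  have "integrable lborel (\<lambda>y. F (x, y))" for x
  proof (rule Bochner_Integration.integrable_bound)
    show "integrable lborel (\<lambda>y. g1 x * g2 y)" using g2 by auto
    show "(\<lambda>y. F (x, y)) \<in> borel_measurable lborel" by measurable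
    show "AE y in lborel. norm (F (x, y)) \<le> norm (g1 x * g2 y)"
      using bnd nn1 nn2 by (intro AE_I2) simp
  qed
  then show "AE x in lborel. integrable lborel (\<lambda>y. F (x, y))" by simp
  show "integrable lborel (\<lambda>x. LINT y|lborel. norm (F (x, y)))"
  proof (rule Bochner_Integration.integrable_bound)
    show "integrable lborel (\<lambda>x. g1 x * (LINT y|lborel. g2 y))" using g1 by auto
    show "(\<lambda>x. LINT y|lborel. norm (F (x, y))) \<in> borel_measurable lborel" by measurable
    have "norm (LINT y|lborel. norm (F (x, y))) \<le> norm (g1 x * (LINT y|lborel. g2 y))" for x
    proof -
      have "norm (LINT y|lborel. norm (F (x, y))) = (LINT y|lborel. norm (F (x, y)))"
        by (simp add: integral_nonneg_AE)
      also have "\<dots> \<le> (LINT y|lborel. g1 x * g2 y)"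
      proof (rule integral_mono')
        show "integrable lborel (\<lambda>y. g1 x * g2 y)" using g2 by auto
        show "norm (F (x, y)) \<le> g1 x * g2 y" for y
          using bnd[of x y] by simp
      qed (use nn1 nn2 in simp)
      also have "\<dots> = g1 x * (LINT y|lborel. g2 y)" by simp
      also have "\<dots> \<le> norm (g1 x * (LINT y|lborel. g2 y))" by simp
      finally show ?thesis .
    qed
    then show "AE x in lborel. norm (LINT y|lborel. norm (F (x, y))) \<le> norm (g1 x * (LINT y|lborel. g2 y))"
      by simp
  qed
qed

lemma quad_disc:
  fixes A B D :: real
  assumes "\<And>t. 0 \<le> A + 2*t*B + t^2*D" and "D \<ge> 0"
  shows "B^2 \<le> A * D"
proof (cases "D = 0")
  case True
  show ?thesis
  proof (cases "B = 0")
    case False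
    have "0 \<le> A + 2*(-(A+1)/(2*B))*B" using assms(1)[of "-(A+1)/(2*B)"] True by simp
    also have "\<dots> = -1" using False by (simp add: field_simps)
    finally show ?thesis by simp
  qed (use True in simp)
next
  case False
  have "0 \<le> A + 2*(-B/D)*B + (-B/D)^2*D" by (rule assms)
  also have "\<dots> = A - B^2/D" using False by (simp add: field_simps power2_eq_square)
  finally have *: "B^2/D \<le> A" by simp
  have "D > 0" using False assms(2) by simp
  then show ?thesis using * by (simp add: field_simps)
qed


lemma set_int_nonneg:
  fixes f :: "'a \<Rightarrow> real"
  assumes "\<And>x. x \<in> A \<Longrightarrow> 0 \<le> f x"
  shows "0 \<le> (LINT x:A|M. f x)"
  unfolding set_lebesgue_integral_def by (intro integral_nonneg_AE AE_I2) (auto simp: indicator_def assms)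

lemma two_abs_mult_le: "2 * \<bar>u * v\<bar> \<le> u^2 + (v::real)^2"
proof -
  have "0 \<le> (\<bar>u\<bar> - \<bar>v\<bar>)^2" by simp
  then show ?thesis by (simp add: power2_eq_square algebra_simps abs_mult)
qed

lemma cs_set:
  fixes r u v :: "real \<Rightarrow> real"
  assumes S[measurable]: "S \<in> sets borel"
    and [measurable]: "r \<in> borel_measurable borel" "u \<in> borel_measurable borel" "v \<in> borel_measurable borel"
    and rnn: "\<And>x. x \<in> S \<Longrightarrow> r x \<ge> 0"
    and iu: "set_integrable lborel S (\<lambda>x. r x * (u x)^2)"
    and iv: "set_integrable lborel S (\<lambda>x. r x * (v x)^2)"
  shows "set_integrable lborel S (\<lambda>x. r x * u x * v x)"
    and "(LINT x:S|lborel. r x * u x * v x)^2 \<le> (LINT x:S|lborel. r x * (u x)^2) * (LINT x:S|lborel. r x * (v x)^2)"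
proof -
  have iuv: "set_integrable lborel S (\<lambda>x. r x * (u x)^2 + r x * (v x)^2)"
    using iu iv by (rule set_integral_add)
  show I: "set_integrable lborel S (\<lambda>x. r x * u x * v x)"
  proof (rule set_integrable_bound[OF iuv])
    show "set_borel_measurable lborel S (\<lambda>x. r x * u x * v x)"
      unfolding set_borel_measurable_def by measurable
    show "AE x in lborel. x \<in> S \<longrightarrow> norm (r x * u x * v x) \<le> norm (r x * (u x)^2 + r x * (v x)^2)"
    proof (rule AE_I2, rule impI)
      fix x assume "x \<in> S"
      then have r0: "r x \<ge> 0" by (rule rnn)
      have "2 * \<bar>u x * v x\<bar> \<le> (u x)^2 + (v x)^2" by (rule two_abs_mult_le)
      then have "\<bar>u x * v x\<bar> \<le> (u x)^2 + (v x)^2" by simp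
      then have "r x * \<bar>u x * v x\<bar> \<le> r x * ((u x)^2 + (v x)^2)" using r0 by (rule mult_left_mono)
      then show "norm (r x * u x * v x) \<le> norm (r x * (u x)^2 + r x * (v x)^2)"
        using r0 by (simp add: abs_mult algebra_simps)
    qed
  qed
  define A where "A = (LINT x:S|lborel. r x * (u x)^2)"
  define B where "B = (LINT x:S|lborel. r x * u x * v x)"
  define D where "D = (LINT x:S|lborel. r x * (v x)^2)"
  have "0 \<le> A + 2*t*B + t^2*D" for t
  proof -
    have "0 \<le> (LINT x:S|lborel. r x * (u x + t * v x)^2)"
      by (rule set_int_nonneg) (simp add: rnn)
    also have "(LINT x:S|lborel. r x * (u x + t * v x)^2) =
        (LINT x:S|lborel. r x * (u x)^2 + (2*t) * (r x * u x * v x) + t^2 * (r x * (v x)^2))"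
      by (simp add: power2_eq_square algebra_simps)
    also have "\<dots> = A + 2*t*B + t^2*D"
      unfolding A_def B_def D_def
      using iu iv I by (simp add: set_integral_add)
    finally show ?thesis .
  qed
  moreover have "D \<ge> 0" unfolding D_def by (rule set_int_nonneg) (simp add: rnn)
  ultimately have "B^2 \<le> A * D" by (rule quad_disc)
  then show "(LINT x:S|lborel. r x * u x * v x)^2 \<le> (LINT x:S|lborel. r x * (u x)^2) * (LINT x:S|lborel. r x * (v x)^2)"
    unfolding A_def B_def D_def .
qed


lemma bdd_set_integrable:
  fixes g :: "real \<Rightarrow> real"
  assumes K: "K \<in> sets borel" "bounded K" and [measurable]: "g \<in> borel_measurable borel"
    and bnd: "\<And>x. x \<in> K \<Longrightarrow> \<bar>g x\<bar> \<le> B"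
  shows "set_integrable lborel K g"
proof -
  have "emeasure lborel K < \<infinity>" using emeasure_bounded_finite[OF K(2)] .
  then have "integrable lborel (indicator K :: real \<Rightarrow> real)" using K(1) by simp
  then have "set_integrable lborel K (\<lambda>x. B)" unfolding set_integrable_def by simp
  then show ?thesis
  proof (rule set_integrable_bound)
    show "set_borel_measurable lborel K g" unfolding set_borel_measurable_def using K(1) by measurable
    show "AE x in lborel. x \<in> K \<longrightarrow> norm (g x) \<le> norm B"
      using bnd by (intro AE_I2) force
  qed
qed

lemma mono_bound_integrable:
  fixes f :: "nat \<Rightarrow> real \<Rightarrow> real"
  assumes f: "\<And>i. integrable M (f i)" and mono: "AE x in M. mono (\<lambda>n. f n x)"
    and lim: "AE x in M. (\<lambda>i. f i x) \<longlonglongrightarrow> u x"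
    and u: "u \<in> borel_measurable M"
    and B: "\<And>i. integral\<^sup>L M (f i) \<le> B"
  shows "integrable M u" "integral\<^sup>L M u \<le> B"
proof -
  have "incseq (\<lambda>i. integral\<^sup>L M (f i))"
  proof (rule incseq_SucI)
    fix i show "integral\<^sup>L M (f i) \<le> integral\<^sup>L M (f (Suc i))"
      using mono by (intro integral_mono_AE f) (auto elim!: eventually_mono simp: mono_def)
  qed
  then obtain L where L: "(\<lambda>i. integral\<^sup>L M (f i)) \<longlonglongrightarrow> L" using B incseq_convergent by blast
  show "integrable M u" by (rule integrable_monotone_convergence[OF f mono lim L u])
  have "integral\<^sup>L M u = L" by (rule integral_monotone_convergence[OF f mono lim L u])
  moreover have "L \<le> B" using L B by (intro LIMSEQ_le_const2) auto
  ultimately show "integral\<^sup>L M u \<le> B" by simp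
qed

locale setting =
  fixes I :: "real set" and p w :: "real \<Rightarrow> real" and C c :: real
  assumes I_open: "open I"
    and I_conv: "\<And>x y z. x \<in> I \<Longrightarrow> y \<in> I \<Longrightarrow> x \<le> z \<Longrightarrow> z \<le> y \<Longrightarrow> z \<in> I"
    and p_meas[measurable]: "p \<in> borel_measurable borel"
    and p_nonneg: "\<And>x. x \<in> I \<Longrightarrow> p x \<ge> 0"
    and p_int: "set_integrable lborel I p"
    and p_prob: "(LINT x:I|lborel. p x) = 1"
    and p_pos: "AE x in lborel. x \<in> I \<longrightarrow> p x > 0"
    and w_meas[measurable]: "w \<in> borel_measurable borel"
    and w_pos: "AE x in lborel. x \<in> I \<longrightarrow> w x > 0"
    and H2: "\<And>f. f \<in> L2w I (\<lambda>x. p x * w x) \<Longrightarrow> loc_integrable I f"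
    and C_nonneg: "C \<ge> 0"
    and poinc: "\<And>h g. H1 I p w h g \<Longrightarrow> var_p I p h \<le> C * nrm2 I (\<lambda>x. p x * w x) g"
    and c_in: "c \<in> I"
begin

lemma I_meas[measurable]: "I \<in> sets borel"
  using I_open by simp

definition q where "q x = p x * w x"
definition Phi where "Phi f x = (LINT t:I|lborel. f t * kr c x t)"
definition Hs where "Hs \<psi> x = (LINT z:{z\<in>I. z \<le> x}|lborel. p z * \<psi> z)"
definition T where "T \<psi> x = Hs \<psi> x / q x"

lemma ind_le: "indicator {z\<in>I. z \<le> x} z = (indicator I z * (if z \<le> x then 1 else 0) :: real)"
  by (auto simp: indicator_def)

lemma q_meas[measurable]: "q \<in> borel_measurable borel"
  unfolding q_def by measurable

lemma Phi_meas[measurable]: assumes [measurable]: "f \<in> borel_measurable borel" shows "Phi f \<in> borel_measurable borel"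
  unfolding Phi_def set_lebesgue_integral_def by measurable

lemma Hs_meas[measurable]: assumes [measurable]: "\<psi> \<in> borel_measurable borel" shows "Hs \<psi> \<in> borel_measurable borel"
  unfolding Hs_def set_lebesgue_integral_def ind_le by measurable

lemma T_meas[measurable]: assumes [measurable]: "\<psi> \<in> borel_measurable borel" shows "T \<psi> \<in> borel_measurable borel"
  unfolding T_def by measurable

lemma cdf_meas[measurable]: "cdf I p \<in> borel_measurable borel"
  unfolding cdf_def set_lebesgue_integral_def ind_le by measurable

lemma q_pos: "AE x in lborel. x \<in> I \<longrightarrow> q x > 0"
  using p_pos w_pos by eventually_elim (auto simp: q_def)

lemma L2wD:
  assumes "f \<in> L2w I r"
  shows "f \<in> borel_measurable borel" "set_integrable lborel I (\<lambda>x. r x * (f x)^2)"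
  using assms unfolding L2w_def by auto

lemma L2_L1:
  assumes "\<psi> \<in> L2w I p"
  shows "set_integrable lborel I (\<lambda>x. p x * \<psi> x)"
proof -
  note L2wD[OF assms]
  note [measurable] = this(1)
  have "set_integrable lborel I (\<lambda>x. p x + p x * (\<psi> x)^2)"
    using p_int \<open>set_integrable lborel I (\<lambda>x. p x * (\<psi> x)^2)\<close> by (rule set_integral_add)
  then show ?thesis
  proof (rule set_integrable_bound)
    show "set_borel_measurable lborel I (\<lambda>x. p x * \<psi> x)"
      unfolding set_borel_measurable_def by measurable
    show "AE x in lborel. x \<in> I \<longrightarrow> norm (p x * \<psi> x) \<le> norm (p x + p x * (\<psi> x)^2)"
    proof (rule AE_I2, rule impI)
      fix x assume "x \<in> I"
      then have p0: "p x \<ge> 0" by (rule p_nonneg)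
      have "2 * \<bar>1 * \<psi> x\<bar> \<le> 1^2 + (\<psi> x)^2" by (rule two_abs_mult_le)
      then have "\<bar>\<psi> x\<bar> \<le> 1 + (\<psi> x)^2" by simp
      then have "p x * \<bar>\<psi> x\<bar> \<le> p x * (1 + (\<psi> x)^2)" using p0 by (rule mult_left_mono)
      then show "norm (p x * \<psi> x) \<le> norm (p x + p x * (\<psi> x)^2)"
        using p0 by (simp add: abs_mult algebra_simps)
    qed
  qed
qed

lemma bdd_L2w:
  assumes [measurable]: "\<psi> \<in> borel_measurable borel" and bnd: "\<And>x. x \<in> I \<Longrightarrow> \<bar>\<psi> x\<bar> \<le> N"
  shows "\<psi> \<in> L2w I p"
proof -
  have "set_integrable lborel I (\<lambda>x. N^2 * p x)" using p_int by simp
  then have "set_integrable lborel I (\<lambda>x. p x * (\<psi> x)^2)"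
  proof (rule set_integrable_bound)
    show "set_borel_measurable lborel I (\<lambda>x. p x * (\<psi> x)^2)"
      unfolding set_borel_measurable_def by measurable
    show "AE x in lborel. x \<in> I \<longrightarrow> norm (p x * (\<psi> x)^2) \<le> norm (N^2 * p x)"
    proof (rule AE_I2, rule impI)
      fix x assume x: "x \<in> I"
      then have p0: "p x \<ge> 0" by (rule p_nonneg)
      have "(\<psi> x)^2 \<le> N^2" using bnd[OF x] by (metis abs_le_square_iff abs_of_nonneg abs_ge_zero order_trans)
      then have "p x * (\<psi> x)^2 \<le> p x * N^2" using p0 by (rule mult_left_mono)
      then show "norm (p x * (\<psi> x)^2) \<le> norm (N^2 * p x)" using p0 by (simp add: algebra_simps)
    qed
  qed
  then show ?thesis unfolding L2w_def by simp
qed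

lemma bdd_L1:
  assumes "\<psi> \<in> borel_measurable borel" and "\<And>x. x \<in> I \<Longrightarrow> \<bar>\<psi> x\<bar> \<le> N"
  shows "set_integrable lborel I (\<lambda>x. p x * \<psi> x)"
  by (rule L2_L1[OF bdd_L2w[OF assms]])

lemma set_int_subset_le:
  fixes f :: "real \<Rightarrow> real"
  assumes "set_integrable lborel A f" "B \<subseteq> A" "B \<in> sets borel" "A \<in> sets borel" "\<And>x. x \<in> A \<Longrightarrow> f x \<ge> 0"
  shows "(LINT x:B|lborel. f x) \<le> (LINT x:A|lborel. f x)"
proof -
  have iB: "set_integrable lborel B f" using set_integrable_subset[OF assms(1)] assms(2,3) by simp
  show ?thesis
    using iB assms(1) unfolding set_lebesgue_integral_def set_integrable_def
    by (intro integral_mono) (use assms(2,5) in \<open>auto simp: indicator_def\<close>)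
qed

lemma cdf_nonneg: "cdf I p x \<ge> 0"
  unfolding cdf_def by (rule set_int_nonneg) (simp add: p_nonneg)

lemma cdf_le1: "cdf I p x \<le> 1"
proof -
  have "cdf I p x \<le> (LINT y:I|lborel. p y)"
    unfolding cdf_def by (rule set_int_subset_le[OF p_int]) (auto simp: p_nonneg)
  then show ?thesis using p_prob by simp
qed

lemma split_le:
  fixes g :: "real \<Rightarrow> real"
  assumes "set_integrable lborel I g"
  shows "(LINT y:{y\<in>I. x < y}|lborel. g y) = (LINT y:I|lborel. g y) - (LINT y:{y\<in>I. y \<le> x}|lborel. g y)"
proof -
  have i1: "set_integrable lborel {y\<in>I. y \<le> x} g" by (rule set_integrable_subset[OF assms]) auto
  have "(LINT y:I|lborel. g y) = (LINT y:{y\<in>I. x < y}|lborel. g y) + (LINT y:{y\<in>I. y \<le> x}|lborel. g y)"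
  proof -
    have "(\<lambda>y. indicator I y *\<^sub>R g y) = (\<lambda>y. indicator {y\<in>I. x < y} y *\<^sub>R g y + indicator {y\<in>I. y \<le> x} y *\<^sub>R g y)"
      by (auto simp: indicator_def fun_eq_iff)
    moreover have "set_integrable lborel {y\<in>I. x < y} g" by (rule set_integrable_subset[OF assms]) auto
    ultimately show ?thesis using i1 unfolding set_lebesgue_integral_def set_integrable_def by simp
  qed
  then show ?thesis by simp
qed

lemma cdf_compl: "(LINT y:{y\<in>I. x < y}|lborel. p y) = 1 - cdf I p x"
  unfolding cdf_def using split_le[OF p_int, of x] p_prob by simp

lemma KI:
  assumes i: "set_integrable lborel I (\<lambda>z. p z * \<psi> z)" and m0: "(LINT z:I|lborel. p z * \<psi> z) = 0"
  shows "(LINT z:I|lborel. p z * \<psi> z * kr c z t) = - Hs \<psi> t"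
proof (cases "c \<le> t")
  case True
  have "(LINT z:I|lborel. p z * \<psi> z * kr c z t) = (LINT z:{z\<in>I. t < z}|lborel. p z * \<psi> z)"
    unfolding set_lebesgue_integral_def
    by (rule Bochner_Integration.integral_cong) (use True in \<open>auto simp: indicator_def kr_def\<close>)
  also have "\<dots> = - Hs \<psi> t" unfolding Hs_def split_le[OF i] m0 by simp
  finally show ?thesis .
next
  case False
  have "(LINT z:I|lborel. p z * \<psi> z * kr c z t) = (LINT z:{z\<in>I. z \<le> t}|lborel. - (p z * \<psi> z))"
    unfolding set_lebesgue_integral_def
    by (rule Bochner_Integration.integral_cong) (use False in \<open>auto simp: indicator_def kr_def not_less\<close>)
  also have "\<dots> = - Hs \<psi> t" unfolding Hs_def set_lebesgue_integral_def by simp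
  finally show ?thesis .
qed

end

context setting begin

lemma F0:
  assumes fm[measurable]: "f \<in> borel_measurable borel" and psim[measurable]: "\<psi> \<in> borel_measurable borel"
   and i: "set_integrable lborel I (\<lambda>z. p z * \<psi> z)" and m0: "(LINT z:I|lborel. p z * \<psi> z) = 0"
   and intg: "integrable (lborel \<Otimes>\<^sub>M lborel) (\<lambda>(t,z). indicator I t * f t * (indicator I z * (p z * \<psi> z)) * kr c z t)"
  shows "set_integrable lborel I (\<lambda>z. p z * \<psi> z * Phi f z)"
    and "set_integrable lborel I (\<lambda>t. f t * Hs \<psi> t)"
    and "(LINT z:I|lborel. p z * \<psi> z * Phi f z) = - (LINT t:I|lborel. f t * Hs \<psi> t)"
proof -
  define F where "F = (\<lambda>t z. indicator I t * f t * (indicator I z * (p z * \<psi> z)) * kr c z t :: real)"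
  have intF: "integrable (lborel \<Otimes>\<^sub>M lborel) (\<lambda>(t,z). F t z)" using intg unfolding F_def .
  have inner_z: "(LINT z|lborel. F t z) = - (indicator I t * (f t * Hs \<psi> t))" for t
  proof (cases "t \<in> I")
    case True
    have "(\<lambda>z. F t z) = (\<lambda>z. f t * (indicator I z *\<^sub>R (p z * \<psi> z * kr c z t)))"
      by (auto simp: F_def True fun_eq_iff)
    then have "(LINT z|lborel. F t z) = f t * (LINT z:I|lborel. p z * \<psi> z * kr c z t)"
      unfolding set_lebesgue_integral_def by simp
    also have "\<dots> = - (f t * Hs \<psi> t)" using KI[OF i m0] by simp
    finally show ?thesis using True by simp
  next
    case False
    then show ?thesis by (simp add: F_def)
  qed
  have inner_t: "(LINT t|lborel. F t z) = indicator I z * (p z * \<psi> z * Phi f z)" for z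
  proof -
    have "(\<lambda>t. F t z) = (\<lambda>t. (indicator I z * (p z * \<psi> z)) * (indicator I t *\<^sub>R (f t * kr c z t)))"
      by (auto simp: F_def fun_eq_iff)
    then show ?thesis unfolding Phi_def set_lebesgue_integral_def by simp
  qed
  have "integrable lborel (\<lambda>t. LINT z|lborel. F t z)"
    using lborel_pair.integrable_fst'[OF intF] by simp
  then have "integrable lborel (\<lambda>t. - (indicator I t * (f t * Hs \<psi> t)))" unfolding inner_z .
  from integrable_minus[OF this] have "integrable lborel (\<lambda>t. indicator I t *\<^sub>R (f t * Hs \<psi> t))"
    by simp
  then show "set_integrable lborel I (\<lambda>t. f t * Hs \<psi> t)" unfolding set_integrable_def .
  have "integrable (lborel \<Otimes>\<^sub>M lborel) (\<lambda>(z,t). F t z)"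
    using lborel_pair.integrable_product_swap[OF intF] by (simp add: case_prod_beta)
  from lborel_pair.integrable_fst'[OF this]
  have "integrable lborel (\<lambda>z. LINT t|lborel. F t z)" by simp
  then have "integrable lborel (\<lambda>z. indicator I z *\<^sub>R (p z * \<psi> z * Phi f z))" unfolding inner_t by simp
  then show "set_integrable lborel I (\<lambda>z. p z * \<psi> z * Phi f z)" unfolding set_integrable_def .
  have "(LBINT z. LBINT t. F t z) = (LBINT t. LBINT z. F t z)"
    by (rule lborel_pair.Fubini_integral) (use intF in simp)
  then show "(LINT z:I|lborel. p z * \<psi> z * Phi f z) = - (LINT t:I|lborel. f t * Hs \<psi> t)"
    unfolding inner_z inner_t set_lebesgue_integral_def by simp
qed

end

lemma abs_int_le:
  fixes f g :: "'a \<Rightarrow> real"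
  assumes "integrable M g" "\<And>x. \<bar>f x\<bar> \<le> g x"
  shows "\<bar>integral\<^sup>L M f\<bar> \<le> integral\<^sup>L M g"
proof -
  have "\<bar>integral\<^sup>L M f\<bar> \<le> (\<integral>x. \<bar>f x\<bar> \<partial>M)" by (rule integral_abs_bound)
  also have "\<dots> \<le> integral\<^sup>L M g"
    by (rule integral_mono'[OF assms(1)]) (use assms(2) in \<open>auto intro: order_trans[OF abs_ge_zero]\<close>)
  finally show ?thesis .
qed

lemma test_facts:
  assumes tf: "test_fun I \<phi>"
  shows tf_deriv: "\<And>x. DERIV \<phi> x :> deriv \<phi> x"
   and tf_cont: "continuous_on UNIV (deriv \<phi>)"
   and tf_cont0: "continuous_on UNIV \<phi>"
   and tf_compact: "compact (closure {x. \<phi> x \<noteq> 0})"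
   and tf_sub: "closure {x. \<phi> x \<noteq> 0} \<subseteq> I"
   and tf_zero: "\<And>x. x \<notin> closure {x. \<phi> x \<noteq> 0} \<Longrightarrow> \<phi> x = 0"
   and tf_dzero: "\<And>x. x \<notin> closure {x. \<phi> x \<noteq> 0} \<Longrightarrow> deriv \<phi> x = 0"
proof -
  have d: "\<And>k x. (deriv ^^ k) \<phi> differentiable (at x)" and
    cs: "compact (closure {x. \<phi> x \<noteq> 0})" "closure {x. \<phi> x \<noteq> 0} \<subseteq> I"
    using tf unfolding test_fun_def by auto
  show D: "DERIV \<phi> x :> deriv \<phi> x" for x
  proof -
    have "\<phi> differentiable (at x)" using d[of 0 x] by simp
    then show ?thesis by (simp only: DERIV_deriv_iff_real_differentiable)
  qed
  show "continuous_on UNIV (deriv \<phi>)"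
  proof (rule continuous_at_imp_continuous_on, intro ballI)
    fix x :: real
    have "deriv \<phi> differentiable (at x)" using d[of 1 x] by simp
    then have "DERIV (deriv \<phi>) x :> deriv (deriv \<phi>) x"
      by (simp only: DERIV_deriv_iff_real_differentiable)
    then show "isCont (deriv \<phi>) x" by (rule DERIV_isCont)
  qed
  show "continuous_on UNIV \<phi>"
  proof (rule continuous_at_imp_continuous_on, intro ballI)
    fix x :: real show "isCont \<phi> x" using D[of x] by (rule DERIV_isCont)
  qed
  show "compact (closure {x. \<phi> x \<noteq> 0})" "closure {x. \<phi> x \<noteq> 0} \<subseteq> I" by (rule cs(1), rule cs(2))
  show Z: "\<phi> x = 0" if "x \<notin> closure {x. \<phi> x \<noteq> 0}" for x
  proof (rule ccontr)
    assume "\<phi> x \<noteq> 0"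
    then have "x \<in> {x. \<phi> x \<noteq> 0}" by simp
    then have "x \<in> closure {x. \<phi> x \<noteq> 0}" using closure_subset by (rule subsetD[rotated])
    then show False using that by simp
  qed
  show "deriv \<phi> x = 0" if x: "x \<notin> closure {x. \<phi> x \<noteq> 0}" for x
  proof -
    have "DERIV (\<lambda>_. 0) x :> 0" by simp
    moreover have "open (- closure {x. \<phi> x \<noteq> 0})" by (simp add: open_Compl)
    moreover have "x \<in> - closure {x. \<phi> x \<noteq> 0}" using x by simp
    moreover have "0 = \<phi> y" if "y \<in> - closure {x. \<phi> x \<noteq> 0}" for y
    proof -
      from that have "y \<notin> closure {x. \<phi> x \<noteq> 0}" by (rule ComplD)
      from Z[OF this] show ?thesis by (rule sym)
    qed
    ultimately have "DERIV \<phi> x :> 0"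
      by (rule has_field_derivative_transform_within_open)
    then show ?thesis by (rule DERIV_imp_deriv)
  qed
qed

lemma tf_FTC:
  assumes tf: "test_fun I \<phi>" and uv: "u \<le> v"
  shows "(LINT x:{u<..<v}|lborel. deriv \<phi> x) = \<phi> v - \<phi> u"
proof -
  have "(LBINT x=u..v. deriv \<phi> x) = \<phi> v - \<phi> u"
  proof (rule interval_integral_FTC_finite)
    show "continuous_on {min u v..max u v} (deriv \<phi>)"
      using tf_cont[OF tf] by (rule continuous_on_subset) simp
    fix x show "(\<phi> has_vector_derivative deriv \<phi> x) (at x within {min u v..max u v})"
      using tf_deriv[OF tf, of x]
      by (simp add: has_real_derivative_iff_has_vector_derivative[symmetric] has_field_derivative_at_within)
  qed
  then show ?thesis using uv by (simp add: interval_lebesgue_integral_le_eq)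
qed

context setting begin

lemma hull:
  assumes K: "compact K" "K \<subseteq> I"
  obtains \<alpha> \<beta> where "\<alpha> \<in> I" "\<beta> \<in> I" "\<alpha> < c" "c < \<beta>" "\<And>x. x \<in> K \<Longrightarrow> \<alpha> < x \<and> x < \<beta>"
proof -
  have K': "compact (insert c K)" "insert c K \<noteq> {}" "insert c K \<subseteq> I" using K c_in by auto
  obtain m where m: "m \<in> insert c K" "\<And>y. y \<in> insert c K \<Longrightarrow> m \<le> y"
    using compact_attains_inf[OF K'(1,2)] by blast
  obtain M where M: "M \<in> insert c K" "\<And>y. y \<in> insert c K \<Longrightarrow> y \<le> M"
    using compact_attains_sup[OF K'(1,2)] by blast
  have mI: "m \<in> I" and MI: "M \<in> I" using m M K'(3) by auto
  obtain e where e: "e > 0" "ball m e \<subseteq> I" using openE[OF I_open mI] by blast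
  obtain e' where e': "e' > 0" "ball M e' \<subseteq> I" using openE[OF I_open MI] by blast
  have a: "m - e/2 \<in> I" using e by (intro subsetD[OF e(2)]) (simp add: dist_real_def)
  have b: "M + e'/2 \<in> I" using e' by (intro subsetD[OF e'(2)]) (simp add: dist_real_def)
  show ?thesis
  proof (rule that[OF a b])
    show "m - e/2 < c" using m(2)[of c] e by simp
    show "c < M + e'/2" using M(2)[of c] e' by simp
    fix x assume "x \<in> K"
    then show "m - e / 2 < x \<and> x < M + e' / 2" using m(2)[of x] M(2)[of x] e e' by simp
  qed
qed

lemma Icc_sub: "\<alpha> \<in> I \<Longrightarrow> \<beta> \<in> I \<Longrightarrow> {\<alpha>..\<beta>} \<subseteq> I"
proof
  fix x assume "\<alpha> \<in> I" "\<beta> \<in> I" "x \<in> {\<alpha>..\<beta>}"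
  then show "x \<in> I" using I_conv[of \<alpha> \<beta> x] by simp
qed

lemma loc_int_Icc:
  assumes "loc_integrable I f" "\<alpha> \<in> I" "\<beta> \<in> I"
  shows "set_integrable lborel {\<alpha>..\<beta>} f"
proof -
  have "compact {\<alpha>..\<beta>}" "{\<alpha>..\<beta>} \<subseteq> I" using Icc_sub[OF assms(2,3)] by auto
  then show ?thesis using assms(1) unfolding loc_integrable_def by blast
qed

lemma Phi_bound:
  assumes fm[measurable]: "f \<in> borel_measurable borel"
    and ab: "\<alpha> \<le> c" "c \<le> \<beta>" "\<alpha> \<le> x" "x \<le> \<beta>"
    and fi: "set_integrable lborel {\<alpha>..\<beta>} f"
  shows "\<bar>Phi f x\<bar> \<le> (LINT t:{\<alpha>..\<beta>}|lborel. \<bar>f t\<bar>)"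
  unfolding Phi_def set_lebesgue_integral_def
proof (rule abs_int_le)
  show "integrable lborel (\<lambda>t. indicator {\<alpha>..\<beta>} t *\<^sub>R \<bar>f t\<bar>)"
    using set_integrable_abs[OF fi] unfolding set_integrable_def .
  fix t
  show "\<bar>indicator I t *\<^sub>R (f t * kr c x t)\<bar> \<le> indicator {\<alpha>..\<beta>} t *\<^sub>R \<bar>f t\<bar>"
  proof (cases "kr c x t = 0")
    case False
    then have tab: "\<alpha> \<le> t" "t \<le> \<beta>" using ab unfolding kr_def by (auto split: if_splits)
    have "\<bar>indicator I t *\<^sub>R (f t * kr c x t)\<bar> = indicator I t * (\<bar>f t\<bar> * \<bar>kr c x t\<bar>)"
      by (simp add: abs_mult)
    also have "\<dots> \<le> 1 * (\<bar>f t\<bar> * 1)"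
      by (intro mult_mono mult_left_mono abs_kr) (auto simp: indicator_def)
    also have "\<dots> = indicator {\<alpha>..\<beta>} t *\<^sub>R \<bar>f t\<bar>" using tab by simp
    finally show ?thesis .
  qed simp
qed

lemma Phi_loc:
  assumes fm[measurable]: "f \<in> borel_measurable borel" and fl: "loc_integrable I f"
  shows "loc_integrable I (Phi f)"
  unfolding loc_integrable_def
proof (intro allI impI)
  fix K assume K: "compact K \<and> K \<subseteq> I"
  obtain \<alpha> \<beta> where ab: "\<alpha> \<in> I" "\<beta> \<in> I" "\<alpha> < c" "c < \<beta>" "\<And>x. x \<in> K \<Longrightarrow> \<alpha> < x \<and> x < \<beta>"
    using hull[of K] K by blast
  have fi: "set_integrable lborel {\<alpha>..\<beta>} f" by (rule loc_int_Icc[OF fl ab(1,2)])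
  show "set_integrable lborel K (Phi f)"
  proof (rule bdd_set_integrable)
    show "K \<in> sets borel" using K by (simp add: compact_imp_closed borel_closed)
    show "bounded K" using K by (simp add: compact_imp_bounded)
    show "Phi f \<in> borel_measurable borel" by measurable
    fix x assume "x \<in> K"
    from ab(5)[OF this] have "\<alpha> < x" "x < \<beta>" by auto
    then show "\<bar>Phi f x\<bar> \<le> (LINT t:{\<alpha>..\<beta>}|lborel. \<bar>f t\<bar>)"
      using ab(3,4) by (intro Phi_bound[OF fm _ _ _ _ fi]) auto
  qed
qed

end

context setting begin

lemma KD:
  assumes tf: "test_fun I \<phi>" and ab: "\<alpha> \<in> I" "\<beta> \<in> I"
    and S: "\<And>x. x \<in> closure {x. \<phi> x \<noteq> 0} \<Longrightarrow> \<alpha> < x \<and> x < \<beta>" and t: "t \<in> I"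
  shows "(LINT x:I|lborel. deriv \<phi> x * kr c x t) = - \<phi> t"
proof -
  have out: "\<phi> x = 0 \<and> deriv \<phi> x = 0" if "x \<le> \<alpha> \<or> \<beta> \<le> x" for x
  proof -
    have "x \<notin> closure {x. \<phi> x \<noteq> 0}"
    proof
      assume "x \<in> closure {x. \<phi> x \<noteq> 0}"
      from S[OF this] that show False by linarith
    qed
    then show ?thesis using tf_zero[OF tf] tf_dzero[OF tf] by blast
  qed
  have dm[measurable]: "deriv \<phi> \<in> borel_measurable borel"
    by (rule borel_measurable_continuous_onI[OF tf_cont[OF tf]])
  show ?thesis
  proof (cases "c \<le> t")
    case ct: True
    show ?thesis
    proof (cases "t < \<beta>")
      case tb: True
      have "(LINT x:I|lborel. deriv \<phi> x * kr c x t) = (LINT x:{t<..<\<beta>}|lborel. deriv \<phi> x)"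
        unfolding set_lebesgue_integral_def
      proof (rule Bochner_Integration.integral_cong[OF refl])
        fix x
        have k: "kr c x t = (if t < x then 1 else 0)" using ct unfolding kr_def by auto
        show "indicator I x *\<^sub>R (deriv \<phi> x * kr c x t) = indicator {t<..<\<beta>} x *\<^sub>R deriv \<phi> x"
        proof (cases "t < x")
          case True
          show ?thesis
          proof (cases "x < \<beta>")
            case True
            have "x \<in> I" using I_conv[OF t ab(2), of x] \<open>t < x\<close> True by simp
            then show ?thesis using \<open>t < x\<close> True k by simp
          next
            case False
            then have "deriv \<phi> x = 0" using out[of x] by simp
            then show ?thesis by simp
          qed
        next
          case False
          then show ?thesis using k by simp
        qed
      qed
      also have "\<dots> = \<phi> \<beta> - \<phi> t" using tf_FTC[OF tf, of t \<beta>] tb by simp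
      also have "\<phi> \<beta> = 0" using out[of \<beta>] by simp
      finally show ?thesis by simp
    next
      case False
      have "(LINT x:I|lborel. deriv \<phi> x * kr c x t) = (LINT x:I|lborel. 0)"
        unfolding set_lebesgue_integral_def
      proof (rule Bochner_Integration.integral_cong[OF refl])
        fix x
        show "indicator I x *\<^sub>R (deriv \<phi> x * kr c x t) = indicator I x *\<^sub>R 0"
        proof (cases "t < x")
          case True
          then have "deriv \<phi> x = 0" using out[of x] False by simp
          then show ?thesis by simp
        next
          case False
          then have "kr c x t = 0" using ct unfolding kr_def by auto
          then show ?thesis by simp
        qed
      qed
      moreover have "\<phi> t = 0" using out[of t] False by simp
      ultimately show ?thesis by simp
    qed
  next
    case ct: False
    have k: "kr c x t = (if x \<le> t then -1 else 0)" for x using ct unfolding kr_def by auto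
    show ?thesis
    proof (cases "\<alpha> < t")
      case at: True
      have "(LINT x:I|lborel. deriv \<phi> x * kr c x t) = (LINT x:{\<alpha><..<t}|lborel. - deriv \<phi> x)"
        unfolding set_lebesgue_integral_def
      proof (rule integral_cong_AE)
        show "(\<lambda>x. indicator I x *\<^sub>R (deriv \<phi> x * kr c x t)) \<in> borel_measurable lborel" by measurable
        show "(\<lambda>x. indicator {\<alpha><..<t} x *\<^sub>R - deriv \<phi> x) \<in> borel_measurable lborel" by measurable
        have eq: "indicator I x *\<^sub>R (deriv \<phi> x * kr c x t) = indicator {\<alpha><..<t} x *\<^sub>R - deriv \<phi> x"
          if xt: "x \<noteq> t" for x
        proof (cases "x < t")
          case True
          show ?thesis
          proof (cases "\<alpha> < x")
            case True
            have "x \<in> I" using I_conv[OF ab(1) t, of x] \<open>x < t\<close> True by simp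
            then show ?thesis using \<open>x < t\<close> True k[of x] by simp
          next
            case False
            then have "deriv \<phi> x = 0" using out[of x] by simp
            then show ?thesis by simp
          qed
        next
          case False
          then show ?thesis using k[of x] xt by simp
        qed
        show "AE x in lborel. indicator I x *\<^sub>R (deriv \<phi> x * kr c x t) = indicator {\<alpha><..<t} x *\<^sub>R - deriv \<phi> x"
          by (rule AE_mp[OF AE_lborel_singleton[of t]]) (intro AE_I2 impI, erule eq)
      qed
      also have "\<dots> = - (LINT x:{\<alpha><..<t}|lborel. deriv \<phi> x)"
        unfolding set_lebesgue_integral_def by simp
      also have "\<dots> = - (\<phi> t - \<phi> \<alpha>)" using tf_FTC[OF tf, of \<alpha> t] at by simp
      also have "\<phi> \<alpha> = 0" using out[of \<alpha>] by simp
      finally show ?thesis by simp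
    next
      case False
      have "(LINT x:I|lborel. deriv \<phi> x * kr c x t) = (LINT x:I|lborel. 0)"
        unfolding set_lebesgue_integral_def
      proof (rule Bochner_Integration.integral_cong[OF refl])
        fix x
        show "indicator I x *\<^sub>R (deriv \<phi> x * kr c x t) = indicator I x *\<^sub>R 0"
        proof (cases "x \<le> t")
          case True
          then have "deriv \<phi> x = 0" using out[of x] False by simp
          then show ?thesis by simp
        next
          case False
          then show ?thesis using k[of x] by simp
        qed
      qed
      moreover have "\<phi> t = 0" using out[of t] False by simp
      ultimately show ?thesis by simp
    qed
  qed
qed


lemma Phi_test:
  assumes fm[measurable]: "f \<in> borel_measurable borel" and fl: "loc_integrable I f"
    and tf: "test_fun I \<phi>"
  shows "(LINT x:I|lborel. Phi f x * deriv \<phi> x) = - (LINT x:I|lborel. f x * \<phi> x)"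
proof -
  obtain \<alpha> \<beta> where ab: "\<alpha> \<in> I" "\<beta> \<in> I" "\<alpha> < c" "c < \<beta>"
    and S: "\<And>x. x \<in> closure {x. \<phi> x \<noteq> 0} \<Longrightarrow> \<alpha> < x \<and> x < \<beta>"
    using hull[OF tf_compact[OF tf] tf_sub[OF tf]] by blast
  have fab: "set_integrable lborel {\<alpha>..\<beta>} f" by (rule loc_int_Icc[OF fl ab(1,2)])
  have dm[measurable]: "deriv \<phi> \<in> borel_measurable borel"
    by (rule borel_measurable_continuous_onI[OF tf_cont[OF tf]])
  have dnz: "\<alpha> < x \<and> x < \<beta>" if "deriv \<phi> x \<noteq> 0" for x
  proof -
    have "x \<in> closure {x. \<phi> x \<noteq> 0}" using tf_dzero[OF tf, of x] that by blast
    then show ?thesis by (rule S)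
  qed
  have "compact (deriv \<phi> ` {\<alpha>..\<beta>})"
    by (rule compact_continuous_image[OF continuous_on_subset[OF tf_cont[OF tf]]]) auto
  then obtain Bd where Bd: "\<And>x. x \<in> {\<alpha>..\<beta>} \<Longrightarrow> \<bar>deriv \<phi> x\<bar> \<le> Bd"
    using compact_imp_bounded bounded_iff by (metis image_eqI real_norm_def)
  define g1 where "g1 = (\<lambda>x. indicator {\<alpha>..\<beta>} x * \<bar>deriv \<phi> x\<bar> :: real)"
  define g2 where "g2 = (\<lambda>t. indicator {\<alpha>..\<beta>} t * \<bar>f t\<bar> :: real)"
  have g1i: "integrable lborel g1"
  proof -
    have "set_integrable lborel {\<alpha>..\<beta>} (\<lambda>x. \<bar>deriv \<phi> x\<bar>)"
      by (rule bdd_set_integrable[where B=Bd]) (auto simp: Bd)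
    then show ?thesis unfolding g1_def set_integrable_def by simp
  qed
  have g2i: "integrable lborel g2"
    using set_integrable_abs[OF fab] unfolding g2_def set_integrable_def by simp
  define G where "G = (\<lambda>x t. indicator I x * deriv \<phi> x * (indicator I t * f t * kr c x t) :: real)"
  have Gb: "\<bar>G x t\<bar> \<le> g1 x * g2 t" for x t
  proof (cases "deriv \<phi> x = 0 \<or> kr c x t = 0")
    case True
    then show ?thesis by (auto simp: G_def g1_def g2_def)
  next
    case False
    then have x: "\<alpha> < x" "x < \<beta>" using dnz by auto
    from False have "\<alpha> \<le> t \<and> t \<le> \<beta>" using x ab(3,4) unfolding kr_def by (auto split: if_splits)
    then have "g1 x * g2 t = \<bar>deriv \<phi> x\<bar> * \<bar>f t\<bar>" using x by (simp add: g1_def g2_def)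
    moreover have "\<bar>G x t\<bar> = indicator I x * indicator I t * (\<bar>deriv \<phi> x\<bar> * \<bar>f t\<bar>) * \<bar>kr c x t\<bar>"
      by (simp add: G_def abs_mult)
    moreover have "\<dots> \<le> 1 * 1 * (\<bar>deriv \<phi> x\<bar> * \<bar>f t\<bar>) * 1"
      by (intro mult_mono abs_kr) (auto simp: indicator_def)
    ultimately show ?thesis by simp
  qed
  have intG: "integrable (lborel \<Otimes>\<^sub>M lborel) (\<lambda>(x,t). G x t)"
  proof (rule prod_integrable[OF _ g1i g2i])
    show "(\<lambda>(x,t). G x t) \<in> borel_measurable (borel \<Otimes>\<^sub>M borel)" unfolding G_def by measurable
    show "\<And>t. 0 \<le> g1 t" "\<And>t. 0 \<le> g2 t" by (auto simp: g1_def g2_def)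
    show "\<bar>(\<lambda>(x,t). G x t) (x, t)\<bar> \<le> g1 x * g2 t" for x t using Gb[of x t] by simp
  qed
  have Fub: "(LBINT t. LBINT x. G x t) = (LBINT x. LBINT t. G x t)"
    by (rule lborel_pair.Fubini_integral) (use intG in simp)
  have inner_t: "(LBINT t. G x t) = indicator I x * (Phi f x * deriv \<phi> x)" for x
  proof -
    have "(\<lambda>t. G x t) = (\<lambda>t. (indicator I x * deriv \<phi> x) * (indicator I t *\<^sub>R (f t * kr c x t)))"
      by (auto simp: G_def fun_eq_iff)
    then show ?thesis unfolding Phi_def set_lebesgue_integral_def by simp
  qed
  have inner_x: "(LBINT x. G x t) = indicator I t * (- (f t * \<phi> t))" for t
  proof (cases "t \<in> I")
    case True
    have "(\<lambda>x. G x t) = (\<lambda>x. (indicator I t * f t) * (indicator I x *\<^sub>R (deriv \<phi> x * kr c x t)))"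
      by (auto simp: G_def fun_eq_iff)
    then have "(LBINT x. G x t) = (indicator I t * f t) * (LINT x:I|lborel. deriv \<phi> x * kr c x t)"
      unfolding set_lebesgue_integral_def by simp
    also have "\<dots> = indicator I t * (- (f t * \<phi> t))"
      using KD[OF tf ab(1,2) S True] by simp
    finally show ?thesis .
  next
    case False
    then show ?thesis by (simp add: G_def)
  qed
  have "(LINT x:I|lborel. Phi f x * deriv \<phi> x) = (LBINT x. LBINT t. G x t)"
    unfolding inner_t set_lebesgue_integral_def by simp
  also have "\<dots> = (LBINT t. LBINT x. G x t)" using Fub by simp
  also have "\<dots> = (LBINT t. - (indicator I t * (f t * \<phi> t)))" unfolding inner_x by simp
  also have "\<dots> = - (LINT x:I|lborel. f x * \<phi> x)" unfolding set_lebesgue_integral_def by simp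
  finally show ?thesis .
qed

lemma Phi_weak:
  assumes fm[measurable]: "f \<in> borel_measurable borel" and fl: "loc_integrable I f"
  shows "weak_deriv I (Phi f) f"
  unfolding weak_deriv_def using Phi_loc[OF fm fl] fl Phi_test[OF fm fl] by blast

end

context setting begin

lemma q_eq: "(\<lambda>x. p x * w x) = q"
  by (simp add: q_def fun_eq_iff)

lemma nrm2_nonneg: "nrm2 I p f \<ge> 0"
  unfolding nrm2_def by (rule set_int_nonneg) (simp add: p_nonneg)

lemma var_shift:
  assumes u2: "u \<in> L2w I p"
  defines "m \<equiv> (LINT y:I|lborel. p y * u y)"
  shows "set_integrable lborel I (\<lambda>x. p x * (u x - m)^2)"
    and "(LINT x:I|lborel. p x * (u x - m)^2) = var_p I p u"
proof -
  have i2: "set_integrable lborel I (\<lambda>x. p x * (u x)^2)" using L2wD[OF u2] by simp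
  have i1: "set_integrable lborel I (\<lambda>x. p x * u x)" by (rule L2_L1[OF u2])
  have e: "(\<lambda>x. p x * (u x - m)^2) = (\<lambda>x. p x * (u x)^2 - (2*m) * (p x * u x) + m^2 * p x)"
    by (simp add: fun_eq_iff power2_eq_square algebra_simps)
  have ia: "set_integrable lborel I (\<lambda>x. p x * (u x)^2 - (2*m) * (p x * u x))"
    using i2 i1 by (intro set_integral_diff) auto
  have ib: "set_integrable lborel I (\<lambda>x. m^2 * p x)" using p_int by simp
  show "set_integrable lborel I (\<lambda>x. p x * (u x - m)^2)"
    unfolding e using ia ib by (rule set_integral_add)
  have "(LINT x:I|lborel. p x * (u x - m)^2) =
      (LINT x:I|lborel. p x * (u x)^2 - (2*m) * (p x * u x)) + (LINT x:I|lborel. m^2 * p x)"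
    unfolding e using ia ib by (rule set_integral_add)
  also have "\<dots> = (LINT x:I|lborel. p x * (u x)^2) - 2*m*m + m^2"
    using i2 i1 p_prob by (simp add: set_integral_diff m_def)
  also have "\<dots> = var_p I p u" unfolding var_p_def m_def by (simp add: power2_eq_square)
  finally show "(LINT x:I|lborel. p x * (u x - m)^2) = var_p I p u" .
qed

lemma Phi_bound_I:
  assumes fm[measurable]: "f \<in> borel_measurable borel" and fi: "set_integrable lborel I f"
  shows "\<bar>Phi f x\<bar> \<le> (LINT t:I|lborel. \<bar>f t\<bar>)"
  unfolding Phi_def set_lebesgue_integral_def
proof (rule abs_int_le)
  show "integrable lborel (\<lambda>t. indicator I t *\<^sub>R \<bar>f t\<bar>)"
    using set_integrable_abs[OF fi] unfolding set_integrable_def .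
  fix t
  have "\<bar>indicator I t *\<^sub>R (f t * kr c x t)\<bar> = indicator I t * \<bar>f t\<bar> * \<bar>kr c x t\<bar>"
    by (simp add: abs_mult)
  also have "\<dots> \<le> indicator I t * \<bar>f t\<bar> * 1"
    by (intro mult_left_mono abs_kr) auto
  finally show "\<bar>indicator I t *\<^sub>R (f t * kr c x t)\<bar> \<le> indicator I t *\<^sub>R \<bar>f t\<bar>" by simp
qed

lemma Hs_bound:
  assumes i: "set_integrable lborel I (\<lambda>z. p z * \<psi> z)"
  shows "\<bar>Hs \<psi> x\<bar> \<le> (LINT z:I|lborel. \<bar>p z * \<psi> z\<bar>)"
  unfolding Hs_def set_lebesgue_integral_def
proof (rule abs_int_le)
  show "integrable lborel (\<lambda>z. indicator I z *\<^sub>R \<bar>p z * \<psi> z\<bar>)"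
    using set_integrable_abs[OF i] unfolding set_integrable_def .
  fix z show "\<bar>indicator {z \<in> I. z \<le> x} z *\<^sub>R (p z * \<psi> z)\<bar> \<le> indicator I z *\<^sub>R \<bar>p z * \<psi> z\<bar>"
    by (auto simp: indicator_def)
qed


lemma TB:
  assumes psi2: "\<psi> \<in> L2w I p" and m0: "(LINT z:I|lborel. p z * \<psi> z) = 0"
  shows "set_integrable lborel I (\<lambda>x. q x * (T \<psi> x)^2)"
    and "(LINT x:I|lborel. q x * (T \<psi> x)^2) \<le> C * nrm2 I p \<psi>"
proof -
  have psim[measurable]: "\<psi> \<in> borel_measurable borel" using L2wD[OF psi2] by simp
  have ipsi: "set_integrable lborel I (\<lambda>z. p z * \<psi> z)" by (rule L2_L1[OF psi2])
  define L where "L = (LINT z:I|lborel. \<bar>p z * \<psi> z\<bar>)"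
  have HL: "\<bar>Hs \<psi> x\<bar> \<le> L" for x unfolding L_def by (rule Hs_bound[OF ipsi])
  have L0: "L \<ge> 0" using HL[of 0] by linarith
  define H where "H = Hs \<psi>"
  have Hm[measurable]: "H \<in> borel_measurable borel" unfolding H_def by measurable
  define A where "A = (\<lambda>n::nat. {x\<in>I. 1 / real (Suc n) \<le> q x \<and> \<bar>x - c\<bar> \<le> real n})"
  have Am[measurable]: "A n \<in> sets borel" for n unfolding A_def by measurable
  define \<phi> where "\<phi> = (\<lambda>n x. indicator (A n) x * H x / q x)"
  have \<phi>m[measurable]: "\<phi> n \<in> borel_measurable borel" for n unfolding \<phi>_def by measurable
  have qA: "x \<in> A n \<Longrightarrow> q x > 0" for n x
    unfolding A_def by (auto intro: less_le_trans[rotated])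
  have \<phi>supp: "\<phi> n x \<noteq> 0 \<Longrightarrow> x \<in> A n" for n x unfolding \<phi>_def by (auto simp: indicator_def)
  have AI: "A n \<subseteq> I" for n unfolding A_def by auto
  have Ab: "A n \<subseteq> {c - real n..c + real n}" for n unfolding A_def by auto
  have \<phi>b: "\<bar>\<phi> n x\<bar> \<le> real (Suc n) * L" for n x
  proof (cases "x \<in> A n")
    case True
    then have q: "q x > 0" "1 / real (Suc n) \<le> q x" using qA unfolding A_def by auto
    have "\<bar>\<phi> n x\<bar> = \<bar>H x\<bar> * (1 / q x)" using True q by (simp add: \<phi>_def abs_divide)
    also have "\<dots> \<le> L * real (Suc n)"
    proof (rule mult_mono)
      show "\<bar>H x\<bar> \<le> L" unfolding H_def by (rule HL)
      show "1 / q x \<le> real (Suc n)" using q by (simp add: field_simps)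
    qed (use L0 q in auto)
    finally show ?thesis by (simp add: mult.commute)
  next
    case False
    then show ?thesis using L0 by (simp add: \<phi>_def)
  qed
  have suppA_int: "set_integrable lborel I g" if gm: "g \<in> borel_measurable borel"
      and gs: "\<And>x. g x \<noteq> 0 \<Longrightarrow> x \<in> A n" and gb: "\<And>x. \<bar>g x\<bar> \<le> B" for g :: "real \<Rightarrow> real" and n B
  proof -
    have "set_integrable lborel {c - real n..c + real n} g"
      by (rule bdd_set_integrable[where B=B]) (auto simp: gb gm)
    moreover have "(\<lambda>x. indicator {c - real n..c + real n} x *\<^sub>R g x) = (\<lambda>x. indicator I x *\<^sub>R g x)"
    proof
      fix x show "indicator {c - real n..c + real n} x *\<^sub>R g x = indicator I x *\<^sub>R g x"
      proof (cases "g x = 0")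
        case False
        then have "x \<in> A n" by (rule gs)
        then have "x \<in> I" "x \<in> {c - real n..c + real n}" using AI[of n] Ab[of n] by auto
        then show ?thesis by simp
      qed simp
    qed
    ultimately show ?thesis unfolding set_integrable_def by simp
  qed
  define s where "s = (\<lambda>n. LINT x:I|lborel. q x * (\<phi> n x)^2)"
  have s_eq: "q x * (\<phi> n x)^2 = indicator (A n) x * (H x)^2 / q x" for n x
  proof (cases "x \<in> A n")
    case True then have "q x > 0" by (rule qA)
    then show ?thesis using True by (simp add: \<phi>_def power2_eq_square)
  qed (simp add: \<phi>_def)
  have s_eq2: "q x * (\<phi> n x)^2 = \<phi> n x * H x" for n x
  proof (cases "x \<in> A n")
    case True then have "q x > 0" by (rule qA)
    then show ?thesis using True by (simp add: \<phi>_def power2_eq_square)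
  qed (simp add: \<phi>_def)
  have q\<phi>I: "set_integrable lborel I (\<lambda>x. q x * (\<phi> n x)^2)" for n
  proof (rule suppA_int)
    show "(\<lambda>x. q x * (\<phi> n x)^2) \<in> borel_measurable borel" by measurable
    show "q x * (\<phi> n x)^2 \<noteq> 0 \<Longrightarrow> x \<in> A n" for x using \<phi>supp[of n x] by auto
    show "\<bar>q x * (\<phi> n x)^2\<bar> \<le> real (Suc n) * L^2" for x
    proof (cases "x \<in> A n")
      case True
      then have q: "q x > 0" "1 / real (Suc n) \<le> q x" using qA unfolding A_def by auto
      have "\<bar>q x * (\<phi> n x)^2\<bar> = (H x)^2 * (1 / q x)" using s_eq[of x n] True q by simp
      also have "\<dots> \<le> L^2 * real (Suc n)"
      proof (rule mult_mono)
        have "\<bar>H x\<bar> \<le> L" unfolding H_def by (rule HL)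
        then show "(H x)^2 \<le> L^2" by (metis abs_ge_zero abs_le_square_iff abs_of_nonneg L0 order_trans)
        show "1 / q x \<le> real (Suc n)" using q by (simp add: field_simps)
      qed (use L0 q in auto)
      finally show ?thesis by (simp add: mult.commute)
    next
      case False
      then show ?thesis using L0 by (simp add: \<phi>_def)
    qed
  qed
  have s_le: "s n \<le> C * nrm2 I p \<psi>" for n
  proof -
    have \<phi>I: "set_integrable lborel I (\<phi> n)"
      by (rule suppA_int[OF \<phi>m \<phi>supp \<phi>b])
    have \<phi>loc: "loc_integrable I (\<phi> n)"
      unfolding loc_integrable_def
    proof (intro allI impI)
      fix K assume K: "compact K \<and> K \<subseteq> I"
      show "set_integrable lborel K (\<phi> n)"
      proof (rule bdd_set_integrable[where B="real (Suc n) * L"])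
        show "K \<in> sets borel" "bounded K" using K by (auto simp: compact_imp_closed borel_closed compact_imp_bounded)
        show "\<phi> n \<in> borel_measurable borel" by simp
        show "\<bar>\<phi> n x\<bar> \<le> real (Suc n) * L" for x by (rule \<phi>b)
      qed
    qed
    note q\<phi>I = q\<phi>I[of n]
    have \<phi>2: "\<phi> n \<in> L2w I q" unfolding L2w_def using q\<phi>I by simp
    define Ph where "Ph = Phi (\<phi> n)"
    have Phm[measurable]: "Ph \<in> borel_measurable borel" unfolding Ph_def by measurable
    have Phb: "\<bar>Ph x\<bar> \<le> (LINT t:I|lborel. \<bar>\<phi> n t\<bar>)" for x
      unfolding Ph_def by (rule Phi_bound_I[OF \<phi>m \<phi>I])
    have Ph2: "Ph \<in> L2w I p" by (rule bdd_L2w[OF Phm Phb])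
    have "H1 I p w Ph (\<phi> n)"
      unfolding H1_def q_eq Ph_def using Ph2 \<phi>2 Phi_weak[OF \<phi>m \<phi>loc] unfolding Ph_def by simp
    then have var: "var_p I p Ph \<le> C * s n"
      using poinc unfolding q_eq nrm2_def s_def by blast
    have intF: "integrable (lborel \<Otimes>\<^sub>M lborel)
        (\<lambda>(t,z). indicator I t * \<phi> n t * (indicator I z * (p z * \<psi> z)) * kr c z t)"
    proof (rule prod_integrable)
      show "integrable lborel (\<lambda>t. indicator I t * \<bar>\<phi> n t\<bar>)"
        using set_integrable_abs[OF \<phi>I] unfolding set_integrable_def by simp
      show "integrable lborel (\<lambda>z. indicator I z * \<bar>p z * \<psi> z\<bar>)"
        using set_integrable_abs[OF ipsi] unfolding set_integrable_def by simp
      show "(\<lambda>(t,z). indicator I t * \<phi> n t * (indicator I z * (p z * \<psi> z)) * kr c z t) \<in> borel_measurable (borel \<Otimes>\<^sub>M borel)"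
        by measurable
      fix t z
      have "\<bar>indicator I t * \<phi> n t * (indicator I z * (p z * \<psi> z)) * kr c z t\<bar>
          = (indicator I t * \<bar>\<phi> n t\<bar>) * (indicator I z * \<bar>p z * \<psi> z\<bar>) * \<bar>kr c z t\<bar>"
        by (simp add: abs_mult)
      also have "\<dots> \<le> (indicator I t * \<bar>\<phi> n t\<bar>) * (indicator I z * \<bar>p z * \<psi> z\<bar>) * 1"
        by (intro mult_left_mono abs_kr) auto
      finally show "\<bar>(\<lambda>(t,z). indicator I t * \<phi> n t * (indicator I z * (p z * \<psi> z)) * kr c z t) (t, z)\<bar>
          \<le> indicator I t * \<bar>\<phi> n t\<bar> * (indicator I z * \<bar>p z * \<psi> z\<bar>)" by simp
    qed auto
    note F = F0[OF \<phi>m psim ipsi m0 intF]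
    define m where "m = (LINT y:I|lborel. p y * Ph y)"
    have "s n = (LINT x:I|lborel. \<phi> n x * H x)"
      unfolding s_def s_eq2 ..
    also have "\<dots> = - (LINT z:I|lborel. p z * \<psi> z * Ph z)" using F(3) unfolding Ph_def H_def by simp
    also have "(LINT z:I|lborel. p z * \<psi> z * Ph z) = (LINT z:I|lborel. p z * \<psi> z * (Ph z - m))"
    proof -
      have "(LINT z:I|lborel. p z * \<psi> z * (Ph z - m)) = (LINT z:I|lborel. p z * \<psi> z * Ph z - m * (p z * \<psi> z))"
        by (simp add: algebra_simps)
      also have "\<dots> = (LINT z:I|lborel. p z * \<psi> z * Ph z) - m * 0"
        using F(1)[unfolded Ph_def[symmetric]] ipsi m0 by (simp add: set_integral_diff)
      finally show ?thesis by simp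
    qed
    finally have sn: "s n = - (LINT z:I|lborel. p z * \<psi> z * (Ph z - m))" .
    note vs = var_shift[OF Ph2, folded m_def]
    have "(LINT z:I|lborel. p z * \<psi> z * (Ph z - m))^2 \<le> (LINT z:I|lborel. p z * (\<psi> z)^2) * (LINT z:I|lborel. p z * (Ph z - m)^2)"
      by (rule cs_set(2)) (use L2wD[OF psi2] vs(1) p_nonneg in auto)
    then have "(s n)^2 \<le> nrm2 I p \<psi> * var_p I p Ph" unfolding sn vs(2) nrm2_def by simp
    also have "\<dots> \<le> nrm2 I p \<psi> * (C * s n)" by (rule mult_left_mono[OF var nrm2_nonneg])
    finally have sq: "(s n)^2 \<le> C * nrm2 I p \<psi> * s n" by (simp add: algebra_simps)
    have "0 \<le> q x * (\<phi> n x)^2" for x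
    proof (cases "x \<in> A n")
      case True then have "q x > 0" by (rule qA)
      then show ?thesis unfolding s_eq using True by simp
    qed (simp add: \<phi>_def)
    then have s0: "s n \<ge> 0" unfolding s_def by (intro set_int_nonneg)
    show ?thesis
    proof (cases "s n = 0")
      case True then show ?thesis using C_nonneg nrm2_nonneg by simp
    next
      case False
      then have "s n > 0" using s0 by simp
      then show ?thesis using sq by (simp add: power2_eq_square)
    qed
  qed
  define fn where "fn = (\<lambda>n x. indicator I x * (q x * (\<phi> n x)^2))"
  have fnn: "0 \<le> fn n x" for n x
  proof (cases "x \<in> A n")
    case True then have "q x > 0" by (rule qA)
    then show ?thesis unfolding fn_def s_eq using True by simp
  qed (simp add: \<phi>_def fn_def)
  have Amono: "A n \<subseteq> A (Suc n)" for n
  proof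
    fix x assume "x \<in> A n"
    then have "x \<in> I" "1 / real (Suc n) \<le> q x" "\<bar>x - c\<bar> \<le> real n" unfolding A_def by auto
    moreover have "1 / real (Suc (Suc n)) \<le> 1 / real (Suc n)" by (simp add: frac_le)
    ultimately show "x \<in> A (Suc n)" unfolding A_def by auto
  qed
  have lim_u: "integrable lborel (\<lambda>x. indicator I x * (q x * (T \<psi> x)^2)) \<and>
    integral\<^sup>L lborel (\<lambda>x. indicator I x * (q x * (T \<psi> x)^2)) \<le> C * nrm2 I p \<psi>"
  proof -
    have h1: "integrable lborel (fn n)" for n using q\<phi>I[of n] unfolding fn_def set_integrable_def by simp
    have h2: "AE x in lborel. mono (\<lambda>n. fn n x)"
    proof (rule AE_I2, rule incseq_SucI)
      fix x n show "fn n x \<le> fn (Suc n) x"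
      proof (cases "x \<in> A n")
        case True
        then have "x \<in> A (Suc n)" using Amono by blast
        then show ?thesis using True by (simp add: fn_def \<phi>_def)
      next
        case False
        then have "fn n x = 0" by (simp add: fn_def \<phi>_def)
        then show ?thesis using fnn[of "Suc n" x] by simp
      qed
    qed
    have h3: "AE x in lborel. (\<lambda>n. fn n x) \<longlonglongrightarrow> indicator I x * (q x * (T \<psi> x)^2)"
      using q_pos
    proof eventually_elim
      fix x assume qx: "x \<in> I \<longrightarrow> 0 < q x"
      show "(\<lambda>n. fn n x) \<longlonglongrightarrow> indicator I x * (q x * (T \<psi> x)^2)"
      proof (cases "x \<in> I")
        case False then show ?thesis by (simp add: fn_def)
      next
        case True
        then have q: "q x > 0" using qx by simp
        obtain N :: nat where N: "max (1 / q x) \<bar>x - c\<bar> \<le> real N" using real_arch_simple by blast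
        have "fn n x = indicator I x * (q x * (T \<psi> x)^2)" if "N \<le> n" for n
        proof -
          have "1 / q x \<le> real n" using N that by (meson max.boundedE of_nat_le_iff order_trans)
          then have "1 / q x \<le> real (Suc n)" by simp
          then have "1 / real (Suc n) \<le> q x" using q by (simp add: field_simps)
          moreover have "\<bar>x - c\<bar> \<le> real n" using N that by (meson max.boundedE of_nat_le_iff order_trans)
          ultimately have "x \<in> A n" using True unfolding A_def by simp
          then show ?thesis using True q by (simp add: fn_def \<phi>_def T_def H_def power2_eq_square)
        qed
        then show ?thesis by (intro tendsto_eventually eventually_sequentiallyI)
      qed
    qed
    have h4: "(\<lambda>x. indicator I x * (q x * (T \<psi> x)^2)) \<in> borel_measurable lborel" by measurable
    have h5: "integral\<^sup>L lborel (fn n) \<le> C * nrm2 I p \<psi>" for n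
      using s_le[of n] unfolding s_def fn_def set_lebesgue_integral_def by simp
    from mono_bound_integrable[OF h1 h2 h3 h4 h5] show ?thesis by blast
  qed
  show "set_integrable lborel I (\<lambda>x. q x * (T \<psi> x)^2)"
    using lim_u unfolding set_integrable_def by simp
  show "(LINT x:I|lborel. q x * (T \<psi> x)^2) \<le> C * nrm2 I p \<psi>"
    using lim_u unfolding set_lebesgue_integral_def by simp
qed

end

context setting begin

lemma p_int_sub: "A \<in> sets borel \<Longrightarrow> A \<subseteq> I \<Longrightarrow> set_integrable lborel A p"
  by (rule set_integrable_subset[OF p_int]) auto

lemma int_pos:
  assumes U[measurable]: "U \<in> sets borel" and UI: "U \<subseteq> I" and mU: "emeasure lborel U > 0"
  shows "(LINT z:U|lborel. p z) > 0"
proof -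
  have iU: "set_integrable lborel U p" using set_integrable_subset[OF p_int] U UI by simp
  have nn: "(LINT z:U|lborel. p z) \<ge> 0" by (rule set_int_nonneg) (use UI p_nonneg in auto)
  show ?thesis
  proof (rule ccontr)
    assume "\<not> ?thesis"
    then have "(LINT z:U|lborel. p z) = 0" using nn by simp
    then have "integral\<^sup>L lborel (\<lambda>z. indicator U z * p z) = 0"
      unfolding set_lebesgue_integral_def by simp
    moreover have "integrable lborel (\<lambda>z. indicator U z * p z)" using iU unfolding set_integrable_def by simp
    moreover have "AE z in lborel. 0 \<le> indicator U z * p z"
      using UI p_nonneg by (intro AE_I2) (auto simp: indicator_def)
    ultimately have "AE z in lborel. indicator U z * p z = 0"
      using integral_nonneg_eq_0_iff_AE by blast
    then have "AE z in lborel. z \<notin> U"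
      using p_pos
    proof eventually_elim
      fix z assume "indicator U z * p z = (0::real)" "z \<in> I \<longrightarrow> 0 < p z"
      then show "z \<notin> U" using UI by (auto simp: indicator_def)
    qed
    then have "{z \<in> space lborel. \<not> z \<notin> U} \<in> null_sets lborel"
      using AE_iff_null[of lborel "\<lambda>z. z \<notin> U"] by simp
    then have "U \<in> null_sets lborel" by simp
    then show False using mU by (simp add: null_sets_def)
  qed
qed

lemma P_pos: assumes x: "x \<in> I" shows "cdf I p x > 0" "cdf I p x < 1"
proof -
  obtain e where e: "e > 0" "ball x e \<subseteq> I" using openE[OF I_open x] by blast
  have s1: "{x - e<..<x} \<subseteq> I" using e by (auto simp: dist_real_def ball_def)
  have s2: "{x<..<x + e} \<subseteq> I" using e by (auto simp: dist_real_def ball_def)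
  have "(LINT z:{x - e<..<x}|lborel. p z) > 0" using s1 e by (intro int_pos) auto
  also have "(LINT z:{x - e<..<x}|lborel. p z) \<le> cdf I p x"
    unfolding cdf_def by (rule set_int_subset_le[OF p_int_sub]) (use s1 p_nonneg in auto)
  finally show "cdf I p x > 0" .
  have "(LINT z:{x<..<x + e}|lborel. p z) > 0" using s2 e by (intro int_pos) auto
  also have "(LINT z:{x<..<x + e}|lborel. p z) \<le> (LINT y:{y\<in>I. x < y}|lborel. p y)"
    by (rule set_int_subset_le[OF p_int_sub]) (use s2 p_nonneg in auto)
  finally show "cdf I p x < 1" using cdf_compl[of x] by simp
qed


definition Sq where "Sq = {x\<in>I. 0 < q x}"

lemma Sq_meas[measurable]: "Sq \<in> sets borel"
  unfolding Sq_def by measurable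

lemma ind_Sq_AE: "AE x in lborel. indicator I x = (indicator Sq x :: real)"
  using q_pos by eventually_elim (auto simp: Sq_def indicator_def)

lemma setI_iff:
  fixes g :: "real \<Rightarrow> real"
  assumes [measurable]: "g \<in> borel_measurable borel"
  shows "set_integrable lborel I g = set_integrable lborel Sq g"
  unfolding set_integrable_def
  by (rule integrable_cong_AE) (use ind_Sq_AE in \<open>auto elim!: eventually_mono\<close>)

lemma setI_eq:
  fixes g :: "real \<Rightarrow> real"
  assumes [measurable]: "g \<in> borel_measurable borel"
  shows "(LINT x:I|lborel. g x) = (LINT x:Sq|lborel. g x)"
  unfolding set_lebesgue_integral_def
  by (rule integral_cong_AE) (use ind_Sq_AE in \<open>auto elim!: eventually_mono\<close>)

lemma nrm2q_nonneg:
  assumes [measurable]: "f \<in> borel_measurable borel"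
  shows "nrm2 I q f \<ge> 0"
proof -
  have "nrm2 I q f = (LINT x:Sq|lborel. q x * (f x)^2)" unfolding nrm2_def by (rule setI_eq) simp
  also have "\<dots> \<ge> 0" by (rule set_int_nonneg) (simp add: Sq_def)
  finally show ?thesis .
qed

lemma fH_bound:
  assumes f2: "f \<in> L2w I q" and psi2: "\<psi> \<in> L2w I p" and m0: "(LINT z:I|lborel. p z * \<psi> z) = 0"
  shows "set_integrable lborel I (\<lambda>t. f t * Hs \<psi> t)"
    and "(LINT t:I|lborel. f t * Hs \<psi> t)^2 \<le> nrm2 I q f * (C * nrm2 I p \<psi>)"
proof -
  have fm[measurable]: "f \<in> borel_measurable borel" using L2wD[OF f2] by simp
  have psim[measurable]: "\<psi> \<in> borel_measurable borel" using L2wD[OF psi2] by simp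
  note tb = TB[OF psi2 m0]
  have eq: "f x * Hs \<psi> x = q x * f x * T \<psi> x" if "x \<in> Sq" for x
    using that by (simp add: Sq_def T_def)
  have a1: "set_integrable lborel Sq (\<lambda>x. q x * (f x)^2)"
    using L2wD(2)[OF f2] setI_iff[of "\<lambda>x. q x * (f x)^2"] by simp
  have a2: "set_integrable lborel Sq (\<lambda>x. q x * (T \<psi> x)^2)"
    using tb(1) setI_iff[of "\<lambda>x. q x * (T \<psi> x)^2"] by simp
  have r0: "\<And>x. x \<in> Sq \<Longrightarrow> q x \<ge> 0" by (simp add: Sq_def)
  note cs = cs_set[OF Sq_meas q_meas fm T_meas[OF psim] r0 a1 a2]
  have "set_integrable lborel Sq (\<lambda>t. f t * Hs \<psi> t)"
    using cs(1) set_integrable_cong[of lborel lborel Sq Sq "\<lambda>t. f t * Hs \<psi> t" "\<lambda>x. q x * f x * T \<psi> x"] eq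
    by simp
  then show "set_integrable lborel I (\<lambda>t. f t * Hs \<psi> t)"
    using setI_iff[of "\<lambda>t. f t * Hs \<psi> t"] by simp
  have e1: "(LINT t:I|lborel. f t * Hs \<psi> t) = (LINT x:Sq|lborel. q x * f x * T \<psi> x)"
  proof -
    have "(LINT t:I|lborel. f t * Hs \<psi> t) = (LINT t:Sq|lborel. f t * Hs \<psi> t)" by (rule setI_eq) simp
    also have "\<dots> = (LINT x:Sq|lborel. q x * f x * T \<psi> x)"
      by (rule set_lebesgue_integral_cong) (use eq in auto)
    finally show ?thesis .
  qed
  have e2: "(LINT x:Sq|lborel. q x * (f x)^2) = nrm2 I q f"
    unfolding nrm2_def by (rule setI_eq[symmetric]) simp
  have e3: "(LINT x:Sq|lborel. q x * (T \<psi> x)^2) \<le> C * nrm2 I p \<psi>"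
    using tb(2) setI_eq[of "\<lambda>x. q x * (T \<psi> x)^2"] by simp
  have "(LINT t:I|lborel. f t * Hs \<psi> t)^2 \<le> nrm2 I q f * (LINT x:Sq|lborel. q x * (T \<psi> x)^2)"
    using cs(2) unfolding e1 e2 .
  also have "\<dots> \<le> nrm2 I q f * (C * nrm2 I p \<psi>)"
    by (rule mult_left_mono[OF e3 nrm2q_nonneg[OF fm]])
  finally show "(LINT t:I|lborel. f t * Hs \<psi> t)^2 \<le> nrm2 I q f * (C * nrm2 I p \<psi>)" .
qed


definition chi where "chi x = (\<lambda>z. (if z \<le> x then 1 else 0) - cdf I p x)"

lemma chi_meas[measurable]: "chi x \<in> borel_measurable borel"
  unfolding chi_def by measurable

lemma chi_bnd: "\<bar>chi x z\<bar> \<le> 1"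
  using cdf_nonneg[of x] cdf_le1[of x] unfolding chi_def by auto

lemma chi_L2: "chi x \<in> L2w I p"
  by (rule bdd_L2w[OF chi_meas chi_bnd])

lemma cdf_as: "(LINT z:I|lborel. p z * (if z \<le> x then 1 else 0)) = cdf I p x"
  unfolding cdf_def set_lebesgue_integral_def
  by (rule Bochner_Integration.integral_cong) (auto simp: indicator_def)

lemma chi_mean0: "(LINT z:I|lborel. p z * chi x z) = 0"
proof -
  have i1: "set_integrable lborel I (\<lambda>z. p z * (if z \<le> x then 1 else 0))"
    by (rule bdd_L1[of _ 1]) auto
  have "(LINT z:I|lborel. p z * chi x z) = (LINT z:I|lborel. p z * (if z \<le> x then 1 else 0) - cdf I p x * p z)"
    unfolding chi_def by (simp add: algebra_simps)
  also have "\<dots> = cdf I p x - cdf I p x * 1"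
    using i1 p_int by (simp add: set_integral_diff cdf_as p_prob)
  finally show ?thesis by simp
qed

lemma Hs_chi: "Hs (chi x) t = kern I p x t"
proof -
  have i0: "set_integrable lborel {z\<in>I. z \<le> t} p" by (rule p_int_sub) auto
  have i1: "set_integrable lborel {z\<in>I. z \<le> t} (\<lambda>z. p z * (if z \<le> x then 1 else 0))"
  proof -
    have "set_integrable lborel {z\<in>I. z \<le> min t x} p" by (rule p_int_sub) auto
    moreover have "(\<lambda>z. indicator {z\<in>I. z \<le> min t x} z *\<^sub>R p z) = (\<lambda>z. indicator {z\<in>I. z \<le> t} z *\<^sub>R (p z * (if z \<le> x then 1 else 0)))"
      by (auto simp: indicator_def fun_eq_iff)
    ultimately show ?thesis unfolding set_integrable_def by simp
  qed
  have e1: "(LINT z:{z\<in>I. z \<le> t}|lborel. p z * (if z \<le> x then 1 else 0)) = cdf I p (min t x)"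
    unfolding cdf_def set_lebesgue_integral_def
    by (rule Bochner_Integration.integral_cong) (auto simp: indicator_def)
  have "Hs (chi x) t = (LINT z:{z\<in>I. z \<le> t}|lborel. p z * (if z \<le> x then 1 else 0) - cdf I p x * p z)"
    unfolding Hs_def chi_def by (simp add: algebra_simps)
  also have "\<dots> = cdf I p (min t x) - cdf I p x * cdf I p t"
    using i1 i0 by (simp add: set_integral_diff e1 cdf_def)
  also have "\<dots> = kern I p x t"
    unfolding kern_def by (cases "t \<le> x") (auto simp: min_def max_def algebra_simps)
  finally show ?thesis .
qed

lemma abs_L2: "f \<in> L2w I q \<Longrightarrow> (\<lambda>x. \<bar>f x\<bar>) \<in> L2w I q"
  unfolding L2w_def by (auto intro: borel_measurable_abs)

lemma S1:
  assumes f2: "f \<in> L2w I q"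
  shows "set_integrable lborel I (\<lambda>t. \<bar>f t\<bar> * kern I p c t)"
    and "(LINT t:I|lborel. \<bar>f t\<bar> * kern I p c t)^2 \<le> nrm2 I q f * (C * nrm2 I p (chi c))"
proof -
  note fb = fH_bound[OF abs_L2[OF f2] chi_L2 chi_mean0, of c]
  show "set_integrable lborel I (\<lambda>t. \<bar>f t\<bar> * kern I p c t)" using fb(1) by (simp add: Hs_chi)
  have "nrm2 I q (\<lambda>x. \<bar>f x\<bar>) = nrm2 I q f" unfolding nrm2_def by simp
  then show "(LINT t:I|lborel. \<bar>f t\<bar> * kern I p c t)^2 \<le> nrm2 I q f * (C * nrm2 I p (chi c))"
    using fb(2) by (simp add: Hs_chi)
qed

definition kap where "kap = min (cdf I p c) (1 - cdf I p c)"

lemma kap_pos: "kap > 0"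
  using P_pos[OF c_in] unfolding kap_def by simp

lemma rho:
  assumes t: "t \<in> I"
  shows "set_integrable lborel I (\<lambda>z. p z * \<bar>kr c z t\<bar>)"
    and "(LINT z:I|lborel. p z * \<bar>kr c z t\<bar>) * kap \<le> kern I p c t"
proof -
  show "set_integrable lborel I (\<lambda>z. p z * \<bar>kr c z t\<bar>)"
    by (rule bdd_L1[of _ 1]) (auto simp: kr_def)
  show "(LINT z:I|lborel. p z * \<bar>kr c z t\<bar>) * kap \<le> kern I p c t"
  proof (cases "c \<le> t")
    case True
    have "(LINT z:I|lborel. p z * \<bar>kr c z t\<bar>) = (LINT z:{z\<in>I. t < z}|lborel. p z)"
      unfolding set_lebesgue_integral_def
      by (rule Bochner_Integration.integral_cong) (use True in \<open>auto simp: indicator_def kr_def\<close>)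
    also have "\<dots> = 1 - cdf I p t" by (rule cdf_compl)
    finally have e: "(LINT z:I|lborel. p z * \<bar>kr c z t\<bar>) = 1 - cdf I p t" .
    have k: "kern I p c t = cdf I p c * (1 - cdf I p t)" unfolding kern_def using True by (simp add: min_def max_def)
    have "(1 - cdf I p t) * kap \<le> (1 - cdf I p t) * cdf I p c"
      using cdf_le1[of t] by (intro mult_left_mono) (auto simp: kap_def)
    then show ?thesis unfolding e k by (simp add: mult.commute)
  next
    case False
    have "(LINT z:I|lborel. p z * \<bar>kr c z t\<bar>) = (LINT z:{z\<in>I. z \<le> t}|lborel. p z)"
      unfolding set_lebesgue_integral_def
      by (rule Bochner_Integration.integral_cong) (use False in \<open>auto simp: indicator_def kr_def\<close>)
    then have e: "(LINT z:I|lborel. p z * \<bar>kr c z t\<bar>) = cdf I p t" unfolding cdf_def .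
    have k: "kern I p c t = cdf I p t * (1 - cdf I p c)" unfolding kern_def using False by (simp add: min_def max_def)
    show ?thesis unfolding e k using cdf_nonneg[of t] by (simp add: kap_def mult_left_mono)
  qed
qed

end

context setting begin

lemma IF_bdd:
  assumes f2: "f \<in> L2w I q" and psim[measurable]: "\<psi> \<in> borel_measurable borel"
    and bnd: "\<And>z. z \<in> I \<Longrightarrow> \<bar>\<psi> z\<bar> \<le> N"
  shows "integrable (lborel \<Otimes>\<^sub>M lborel) (\<lambda>(t,z). indicator I t * f t * (indicator I z * (p z * \<psi> z)) * kr c z t)"
proof (rule lborel_pair.Fubini_integrable)
  have fm[measurable]: "f \<in> borel_measurable borel" using L2wD[OF f2] by simp
  define F where "F = (\<lambda>t z. indicator I t * f t * (indicator I z * (p z * \<psi> z)) * kr c z t :: real)"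
  have N0: "N \<ge> 0" using bnd[OF c_in] by linarith
  show "(\<lambda>(t,z). indicator I t * f t * (indicator I z * (p z * \<psi> z)) * kr c z t) \<in> borel_measurable (lborel \<Otimes>\<^sub>M lborel)"
    by measurable
  have pw: "\<bar>F t z\<bar> \<le> \<bar>f t\<bar> * N * (indicator I z * p z * \<bar>kr c z t\<bar>)" for t z
  proof (cases "z \<in> I \<and> t \<in> I")
    case True
    then have "\<bar>F t z\<bar> = \<bar>f t\<bar> * (\<bar>\<psi> z\<bar> * (p z * \<bar>kr c z t\<bar>))"
      using p_nonneg[of z] by (simp add: F_def abs_mult)
    also have "\<dots> \<le> \<bar>f t\<bar> * (N * (p z * \<bar>kr c z t\<bar>))"
      using True p_nonneg[of z] bnd[of z] by (intro mult_left_mono mult_right_mono) auto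
    finally show ?thesis using True by simp
  next
    case False
    have "0 \<le> \<bar>f t\<bar> * N * (indicator I z * p z * \<bar>kr c z t\<bar>)"
      using N0 p_nonneg[of z] by (cases "z \<in> I") auto
    moreover have "F t z = 0" using False by (auto simp: F_def)
    ultimately show ?thesis by simp
  qed
  have ikr: "integrable lborel (\<lambda>z. indicator I z * p z * \<bar>kr c z t\<bar>)" for t
  proof (rule Bochner_Integration.integrable_bound)
    show "integrable lborel (\<lambda>z. indicator I z * p z)" using p_int unfolding set_integrable_def by simp
    show "(\<lambda>z. indicator I z * p z * \<bar>kr c z t\<bar>) \<in> borel_measurable lborel" by measurable
    show "AE z in lborel. norm (indicator I z * p z * \<bar>kr c z t\<bar>) \<le> norm (indicator I z * p z)"
    proof (rule AE_I2)
      fix z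
      have "\<bar>indicator I z * p z\<bar> * \<bar>kr c z t\<bar> \<le> \<bar>indicator I z * p z\<bar> * 1"
        by (intro mult_left_mono abs_kr) auto
      then show "norm (indicator I z * p z * \<bar>kr c z t\<bar>) \<le> norm (indicator I z * p z)"
        by (simp add: abs_mult)
    qed
  qed
  show "AE t in lborel. integrable lborel (\<lambda>z. (\<lambda>(t,z). indicator I t * f t * (indicator I z * (p z * \<psi> z)) * kr c z t) (t, z))"
  proof (rule AE_I2)
    fix t
    have "integrable lborel (\<lambda>z. indicator I t * f t * (indicator I z * (p z * \<psi> z)) * kr c z t)"
    proof (rule Bochner_Integration.integrable_bound)
      show "integrable lborel (\<lambda>z. \<bar>f t\<bar> * N * (indicator I z * p z * \<bar>kr c z t\<bar>))" using ikr[of t] by simp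
      show "(\<lambda>z. indicator I t * f t * (indicator I z * (p z * \<psi> z)) * kr c z t) \<in> borel_measurable lborel"
        by measurable
      show "AE z in lborel. norm (indicator I t * f t * (indicator I z * (p z * \<psi> z)) * kr c z t)
          \<le> norm (\<bar>f t\<bar> * N * (indicator I z * p z * \<bar>kr c z t\<bar>))"
      proof (rule AE_I2)
        fix z
        have "\<bar>F t z\<bar> \<le> \<bar>\<bar>f t\<bar> * N * (indicator I z * p z * \<bar>kr c z t\<bar>)\<bar>"
          using order_trans[OF pw[of t z] abs_ge_self] .
        then show "norm (indicator I t * f t * (indicator I z * (p z * \<psi> z)) * kr c z t)
          \<le> norm (\<bar>f t\<bar> * N * (indicator I z * p z * \<bar>kr c z t\<bar>))"
          by (simp only: F_def real_norm_def)
      qed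
    qed
    then show "integrable lborel (\<lambda>z. (\<lambda>(t,z). indicator I t * f t * (indicator I z * (p z * \<psi> z)) * kr c z t) (t, z))"
      by simp
  qed
  show "integrable lborel (\<lambda>t. LINT z|lborel. norm ((\<lambda>(t,z). indicator I t * f t * (indicator I z * (p z * \<psi> z)) * kr c z t) (t, z)))"
  proof (rule Bochner_Integration.integrable_bound)
    show "integrable lborel (\<lambda>t. (N / kap) * (indicator I t *\<^sub>R (\<bar>f t\<bar> * kern I p c t)))"
      using S1(1)[OF f2] unfolding set_integrable_def by simp
    show "(\<lambda>t. LINT z|lborel. norm ((\<lambda>(t,z). indicator I t * f t * (indicator I z * (p z * \<psi> z)) * kr c z t) (t, z))) \<in> borel_measurable lborel"
      by measurable
    have "norm (LINT z|lborel. norm (F t z)) \<le> norm ((N / kap) * (indicator I t *\<^sub>R (\<bar>f t\<bar> * kern I p c t)))" for t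
    proof (cases "t \<in> I")
      case False
      then show ?thesis by (simp add: F_def)
    next
      case True
      have "norm (LINT z|lborel. norm (F t z)) = (LINT z|lborel. norm (F t z))"
        by (simp add: integral_nonneg_AE)
      also have "\<dots> \<le> (LINT z|lborel. \<bar>f t\<bar> * N * (indicator I z * p z * \<bar>kr c z t\<bar>))"
        by (rule integral_mono') (use ikr[of t] pw[of t] N0 True p_nonneg in \<open>auto simp: indicator_def\<close>)
      also have "\<dots> = \<bar>f t\<bar> * N * (LINT z:I|lborel. p z * \<bar>kr c z t\<bar>)"
        unfolding set_lebesgue_integral_def by (simp add: mult.assoc)
      also have "\<dots> \<le> \<bar>f t\<bar> * N * (kern I p c t / kap)"
      proof (rule mult_left_mono)
        show "(LINT z:I|lborel. p z * \<bar>kr c z t\<bar>) \<le> kern I p c t / kap"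
          using rho(2)[OF True] kap_pos by (simp add: field_simps)
      qed (use N0 in simp)
      also have "\<dots> = (N / kap) * (indicator I t *\<^sub>R (\<bar>f t\<bar> * kern I p c t))"
        using True by simp
      also have "\<dots> \<le> norm ((N / kap) * (indicator I t *\<^sub>R (\<bar>f t\<bar> * kern I p c t)))"
        by (simp only: real_norm_def abs_ge_self)
      finally show ?thesis .
    qed
    then show "AE t in lborel. norm (LINT z|lborel. norm ((\<lambda>(t,z). indicator I t * f t * (indicator I z * (p z * \<psi> z)) * kr c z t) (t, z)))
        \<le> norm ((N / kap) * (indicator I t *\<^sub>R (\<bar>f t\<bar> * kern I p c t)))"
      by (intro AE_I2) (simp add: F_def)
  qed
qed


lemma F0g:
  assumes fm[measurable]: "f \<in> borel_measurable borel" and psim[measurable]: "\<psi> \<in> borel_measurable borel"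
   and intg: "integrable (lborel \<Otimes>\<^sub>M lborel) (\<lambda>(t,z). indicator I t * f t * (indicator I z * (p z * \<psi> z)) * kr c z t)"
  shows "set_integrable lborel I (\<lambda>z. p z * \<psi> z * Phi f z)"
    and "set_integrable lborel I (\<lambda>t. f t * (LINT z:I|lborel. p z * \<psi> z * kr c z t))"
    and "(LINT z:I|lborel. p z * \<psi> z * Phi f z) = (LINT t:I|lborel. f t * (LINT z:I|lborel. p z * \<psi> z * kr c z t))"
proof -
  define F where "F = (\<lambda>t z. indicator I t * f t * (indicator I z * (p z * \<psi> z)) * kr c z t :: real)"
  define K where "K = (\<lambda>t. LINT z:I|lborel. p z * \<psi> z * kr c z t)"
  have intF: "integrable (lborel \<Otimes>\<^sub>M lborel) (\<lambda>(t,z). F t z)" using intg unfolding F_def .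
  have inner_z: "(LINT z|lborel. F t z) = indicator I t * (f t * K t)" for t
  proof (cases "t \<in> I")
    case True
    have "(\<lambda>z. F t z) = (\<lambda>z. f t * (indicator I z *\<^sub>R (p z * \<psi> z * kr c z t)))"
      by (auto simp: F_def True fun_eq_iff)
    then show ?thesis using True unfolding K_def set_lebesgue_integral_def by simp
  next
    case False
    then show ?thesis by (simp add: F_def)
  qed
  have inner_t: "(LINT t|lborel. F t z) = indicator I z * (p z * \<psi> z * Phi f z)" for z
  proof -
    have "(\<lambda>t. F t z) = (\<lambda>t. (indicator I z * (p z * \<psi> z)) * (indicator I t *\<^sub>R (f t * kr c z t)))"
      by (auto simp: F_def fun_eq_iff)
    then show ?thesis unfolding Phi_def set_lebesgue_integral_def by simp
  qed
  have "integrable lborel (\<lambda>t. LINT z|lborel. F t z)"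
    using lborel_pair.integrable_fst'[OF intF] by simp
  then have "integrable lborel (\<lambda>t. indicator I t *\<^sub>R (f t * K t))" unfolding inner_z by simp
  then show "set_integrable lborel I (\<lambda>t. f t * (LINT z:I|lborel. p z * \<psi> z * kr c z t))"
    unfolding set_integrable_def K_def .
  have "integrable (lborel \<Otimes>\<^sub>M lborel) (\<lambda>(z,t). F t z)"
    using lborel_pair.integrable_product_swap[OF intF] by (simp add: case_prod_beta)
  from lborel_pair.integrable_fst'[OF this]
  have "integrable lborel (\<lambda>z. LINT t|lborel. F t z)" by simp
  then have "integrable lborel (\<lambda>z. indicator I z *\<^sub>R (p z * \<psi> z * Phi f z))" unfolding inner_t by simp
  then show "set_integrable lborel I (\<lambda>z. p z * \<psi> z * Phi f z)" unfolding set_integrable_def .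
  have "(LBINT z. LBINT t. F t z) = (LBINT t. LBINT z. F t z)"
    by (rule lborel_pair.Fubini_integral) (use intF in simp)
  then show "(LINT z:I|lborel. p z * \<psi> z * Phi f z) = (LINT t:I|lborel. f t * (LINT z:I|lborel. p z * \<psi> z * kr c z t))"
    unfolding inner_z inner_t set_lebesgue_integral_def K_def by simp
qed

lemma PhiL1:
  assumes f2: "f \<in> L2w I q"
  shows "set_integrable lborel I (\<lambda>z. p z * Phi f z)"
    and "(LINT z:I|lborel. \<bar>p z * Phi f z\<bar>) \<le> (LINT t:I|lborel. \<bar>f t\<bar> * kern I p c t) / kap"
proof -
  have fm[measurable]: "f \<in> borel_measurable borel" using L2wD[OF f2] by simp
  have "set_integrable lborel I (\<lambda>z. p z * (\<lambda>_. 1) z * Phi f z)"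
    by (rule F0g(1)[OF fm _ IF_bdd[OF f2, of _ 1]]) auto
  then show i1: "set_integrable lborel I (\<lambda>z. p z * Phi f z)" by simp
  define \<psi> where "\<psi> = (\<lambda>z. sgn (Phi f z))"
  have psim[measurable]: "\<psi> \<in> borel_measurable borel" unfolding \<psi>_def by measurable
  have pb: "\<bar>\<psi> z\<bar> \<le> 1" for z by (simp add: \<psi>_def abs_sgn_eq)
  note F = F0g[OF fm psim IF_bdd[OF f2 psim pb]]
  define K where "K = (\<lambda>t. LINT z:I|lborel. p z * \<psi> z * kr c z t)"
  have "(LINT z:I|lborel. \<bar>p z * Phi f z\<bar>) = (LINT z:I|lborel. p z * \<psi> z * Phi f z)"
  proof (rule set_lebesgue_integral_cong)
    show "I \<in> sets lborel" by simp
    show "\<forall>z. z \<in> I \<longrightarrow> \<bar>p z * Phi f z\<bar> = p z * \<psi> z * Phi f z"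
    proof (intro allI impI)
      fix z assume z: "z \<in> I"
      have "sgn (Phi f z) * Phi f z = \<bar>Phi f z\<bar>" by (simp add: sgn_if)
      then show "\<bar>p z * Phi f z\<bar> = p z * \<psi> z * Phi f z"
        using p_nonneg[OF z] by (simp add: \<psi>_def abs_mult mult.assoc)
    qed
  qed
  also have "\<dots> = (LINT t:I|lborel. f t * K t)" using F(3) unfolding K_def .
  also have "\<dots> \<le> (LINT t:I|lborel. \<bar>f t\<bar> * kern I p c t / kap)"
  proof (rule set_integral_mono)
    show "set_integrable lborel I (\<lambda>t. f t * K t)" using F(2) unfolding K_def .
    show "set_integrable lborel I (\<lambda>t. \<bar>f t\<bar> * kern I p c t / kap)" using S1(1)[OF f2] by simp
    fix t assume t: "t \<in> I"
    have "\<bar>K t\<bar> \<le> (LINT z:I|lborel. p z * \<bar>kr c z t\<bar>)"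
      unfolding K_def set_lebesgue_integral_def
    proof (rule abs_int_le)
      show "integrable lborel (\<lambda>z. indicator I z *\<^sub>R (p z * \<bar>kr c z t\<bar>))"
        using rho(1)[OF t] unfolding set_integrable_def .
      fix z
      have "\<bar>indicator I z *\<^sub>R (p z * \<psi> z * kr c z t)\<bar> = indicator I z * \<bar>p z\<bar> * \<bar>\<psi> z\<bar> * \<bar>kr c z t\<bar>"
        by (simp add: abs_mult)
      also have "\<dots> \<le> indicator I z * \<bar>p z\<bar> * 1 * \<bar>kr c z t\<bar>"
        by (intro mult_left_mono mult_right_mono pb) auto
      also have "\<dots> = indicator I z *\<^sub>R (p z * \<bar>kr c z t\<bar>)"
        by (cases "z \<in> I") (auto simp: p_nonneg abs_mult)
      finally show "\<bar>indicator I z *\<^sub>R (p z * \<psi> z * kr c z t)\<bar> \<le> indicator I z *\<^sub>R (p z * \<bar>kr c z t\<bar>)" .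
    qed
    also have "\<dots> \<le> kern I p c t / kap" using rho(2)[OF t] kap_pos by (simp add: field_simps)
    finally have Kb: "\<bar>K t\<bar> \<le> kern I p c t / kap" .
    have "f t * K t \<le> \<bar>f t\<bar> * \<bar>K t\<bar>" by (simp add: abs_mult[symmetric])
    also have "\<dots> \<le> \<bar>f t\<bar> * (kern I p c t / kap)" by (rule mult_left_mono[OF Kb]) simp
    finally show "f t * K t \<le> \<bar>f t\<bar> * kern I p c t / kap" by simp
  qed
  also have "\<dots> = (LINT t:I|lborel. \<bar>f t\<bar> * kern I p c t) / kap" by simp
  finally show "(LINT z:I|lborel. \<bar>p z * Phi f z\<bar>) \<le> (LINT t:I|lborel. \<bar>f t\<bar> * kern I p c t) / kap" .
qed

end

definition clamp :: "real \<Rightarrow> real \<Rightarrow> real" where "clamp N x = max (-N) (min N x)"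

lemma clamp_meas[measurable]: assumes [measurable]: "f \<in> borel_measurable M" shows "(\<lambda>x. clamp N (f x)) \<in> borel_measurable M"
  unfolding clamp_def by measurable

lemma clamp_bnd: "N \<ge> 0 \<Longrightarrow> \<bar>clamp N x\<bar> \<le> N"
  unfolding clamp_def by auto

lemma clamp_abs: "N \<ge> 0 \<Longrightarrow> \<bar>clamp N x\<bar> \<le> \<bar>x\<bar>"
  unfolding clamp_def by auto

lemma clamp_prod: "N \<ge> 0 \<Longrightarrow> (clamp N x)^2 \<le> clamp N x * x"
proof -
  assume N: "N \<ge> 0"
  show ?thesis
  proof (cases "x > N")
    case True then show ?thesis using N by (simp add: clamp_def power2_eq_square mult_left_mono)
  next
    case False
    show ?thesis
    proof (cases "x < -N")
      case True
      then have "clamp N x = -N" using N by (simp add: clamp_def)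
      moreover have "N * N \<le> N * (- x)" using True N by (intro mult_left_mono) auto
      ultimately show ?thesis by (simp add: power2_eq_square)
    next
      case False
      then have "clamp N x = x" using \<open>\<not> x > N\<close> by (simp add: clamp_def)
      then show ?thesis by (simp add: power2_eq_square)
    qed
  qed
qed

lemma clamp_id: "\<bar>x\<bar> \<le> N \<Longrightarrow> clamp N x = x"
  unfolding clamp_def by auto

lemma clamp_mono_sq: "0 \<le> N \<Longrightarrow> N \<le> M \<Longrightarrow> (clamp N x)^2 \<le> (clamp M x)^2"
proof -
  assume "0 \<le> N" "N \<le> M"
  then have "\<bar>clamp N x\<bar> \<le> \<bar>clamp M x\<bar>" unfolding clamp_def by auto
  then show ?thesis by (metis abs_le_square_iff)
qed

lemma arith1:
  fixes X Y a b :: real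
  assumes "X \<le> Y + b" "Y^2 \<le> a*X" "a \<ge> 0" "b \<ge> 0" "Y \<ge> 0"
  shows "X \<le> a + 2*b"
proof (rule ccontr)
  assume "\<not> X \<le> a + 2*b"
  then have h: "X > a + 2*b" by simp
  have h1: "0 \<le> X - b" and h2: "X - b \<le> Y" using assms h by linarith+
  have "(X - b)^2 \<le> Y^2" by (rule power_mono[OF h2 h1])
  have "X > 0" "X - a - 2*b > 0" using h assms by linarith+
  then have "X * (X - a - 2*b) > 0" by simp
  moreover have "(X - b)^2 = X * (X - a - 2*b) + a*X + b^2" by (simp add: power2_eq_square algebra_simps)
  ultimately have "(X - b)^2 > a*X" by (smt (verit) zero_le_power2)
  then show False using \<open>(X - b)^2 \<le> Y^2\<close> assms(2) by simp
qed

context setting begin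

lemma PhiL2:
  assumes f2: "f \<in> L2w I q"
  shows "Phi f \<in> L2w I p"
    and "nrm2 I p (Phi f) \<le> C * nrm2 I q f + 2 * (LINT z:I|lborel. \<bar>p z * Phi f z\<bar>)^2"
proof -
  have fm[measurable]: "f \<in> borel_measurable borel" using L2wD[OF f2] by simp
  define \<Phi> where "\<Phi> = Phi f"
  have \<Phi>m[measurable]: "\<Phi> \<in> borel_measurable borel" unfolding \<Phi>_def by measurable
  have i\<Phi>: "set_integrable lborel I (\<lambda>z. p z * \<Phi> z)" unfolding \<Phi>_def by (rule PhiL1(1)[OF f2])
  define E1 where "E1 = (LINT z:I|lborel. \<bar>p z * \<Phi> z\<bar>)"
  define E\<Phi> where "E\<Phi> = (LINT z:I|lborel. p z * \<Phi> z)"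
  have E1_0: "E1 \<ge> 0" unfolding E1_def by (rule set_int_nonneg) simp
  have EPhi: "\<bar>E\<Phi>\<bar> \<le> E1" unfolding E\<Phi>_def E1_def set_lebesgue_integral_def
    by (rule abs_int_le) (use set_integrable_abs[OF i\<Phi>] in \<open>auto simp: set_integrable_def abs_mult\<close>)
  define a where "a = nrm2 I q f * C"
  have a0: "a \<ge> 0" unfolding a_def using nrm2q_nonneg[OF fm] C_nonneg by simp
  define \<Phi>N where "\<Phi>N = (\<lambda>(N::nat) z. clamp (real N) (\<Phi> z))"
  have \<Phi>Nm[measurable]: "\<Phi>N N \<in> borel_measurable borel" for N unfolding \<Phi>N_def by measurable
  define X where "X = (\<lambda>N. LINT z:I|lborel. p z * (\<Phi>N N z)^2)"
  have XN: "X N \<le> a + 2 * E1^2" for N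
  proof -
    have b\<Phi>N: "\<bar>\<Phi>N N z\<bar> \<le> real N" for z unfolding \<Phi>N_def by (rule clamp_bnd) simp
    have \<Phi>N2: "\<Phi>N N \<in> L2w I p" by (rule bdd_L2w[OF \<Phi>Nm b\<Phi>N])
    define mN where "mN = (LINT z:I|lborel. p z * \<Phi>N N z)"
    have imN: "set_integrable lborel I (\<lambda>z. p z * \<Phi>N N z)" by (rule L2_L1[OF \<Phi>N2])
    have mNb: "\<bar>mN\<bar> \<le> E1" unfolding mN_def E1_def set_lebesgue_integral_def
    proof (rule abs_int_le)
      show "integrable lborel (\<lambda>x. indicator I x *\<^sub>R \<bar>p x * \<Phi> x\<bar>)"
        using set_integrable_abs[OF i\<Phi>] unfolding set_integrable_def .
      fix z show "\<bar>indicator I z *\<^sub>R (p z * \<Phi>N N z)\<bar> \<le> indicator I z *\<^sub>R \<bar>p z * \<Phi> z\<bar>"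
        using clamp_abs[of "real N" "\<Phi> z"] by (auto simp: indicator_def abs_mult \<Phi>N_def intro: mult_left_mono)
    qed
    define \<psi> where "\<psi> = (\<lambda>z. \<Phi>N N z - mN)"
    have psim[measurable]: "\<psi> \<in> borel_measurable borel" unfolding \<psi>_def by measurable
    have pb: "\<bar>\<psi> z\<bar> \<le> real N + \<bar>mN\<bar>" for z unfolding \<psi>_def using b\<Phi>N[of z] by linarith
    have psi2: "\<psi> \<in> L2w I p" by (rule bdd_L2w[OF psim pb])
    have ipsi: "set_integrable lborel I (\<lambda>z. p z * \<psi> z)" by (rule L2_L1[OF psi2])
    have m0: "(LINT z:I|lborel. p z * \<psi> z) = 0"
    proof -
      have "(LINT z:I|lborel. p z * \<psi> z) = (LINT z:I|lborel. p z * \<Phi>N N z - mN * p z)"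
        unfolding \<psi>_def by (simp add: algebra_simps)
      also have "\<dots> = mN - mN * 1" using imN p_int p_prob by (simp add: set_integral_diff mN_def)
      finally show ?thesis by simp
    qed
    note F = F0[OF fm psim ipsi m0 IF_bdd[OF f2 psim pb]]
    define Y where "Y = (LINT t:I|lborel. f t * Hs \<psi> t)"
    have Y2: "Y^2 \<le> nrm2 I q f * (C * nrm2 I p \<psi>)" unfolding Y_def by (rule fH_bound(2)[OF f2 psi2 m0])
    have "nrm2 I p \<psi> = var_p I p (\<Phi>N N)"
      using var_shift(2)[OF \<Phi>N2] unfolding nrm2_def \<psi>_def mN_def by simp
    also have "\<dots> \<le> X N" unfolding var_p_def X_def by simp
    finally have "nrm2 I p \<psi> \<le> X N" .
    then have "nrm2 I q f * (C * nrm2 I p \<psi>) \<le> nrm2 I q f * (C * X N)"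
      using nrm2q_nonneg[OF fm] C_nonneg by (intro mult_left_mono) auto
    then have Y2': "(\<bar>Y\<bar>)^2 \<le> a * X N"
      using Y2 unfolding a_def by simp
    have i_prod: "set_integrable lborel I (\<lambda>z. p z * \<Phi>N N z * \<Phi> z)"
    proof (rule set_integrable_bound)
      show "set_integrable lborel I (\<lambda>z. real N * (p z * \<Phi> z))" using i\<Phi> by simp
      show "set_borel_measurable lborel I (\<lambda>z. p z * \<Phi>N N z * \<Phi> z)"
        unfolding set_borel_measurable_def by measurable
      show "AE z in lborel. z \<in> I \<longrightarrow> norm (p z * \<Phi>N N z * \<Phi> z) \<le> norm (real N * (p z * \<Phi> z))"
      proof (rule AE_I2, rule impI)
        fix z assume "z \<in> I"
        have "\<bar>p z\<bar> * \<bar>\<Phi>N N z\<bar> * \<bar>\<Phi> z\<bar> \<le> \<bar>p z\<bar> * real N * \<bar>\<Phi> z\<bar>"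
          using b\<Phi>N[of z] by (intro mult_right_mono mult_left_mono) auto
        then show "norm (p z * \<Phi>N N z * \<Phi> z) \<le> norm (real N * (p z * \<Phi> z))"
          by (simp add: abs_mult algebra_simps)
      qed
    qed
    have iX: "set_integrable lborel I (\<lambda>z. p z * (\<Phi>N N z)^2)" using L2wD(2)[OF \<Phi>N2] .
    have "X N \<le> (LINT z:I|lborel. p z * \<Phi>N N z * \<Phi> z)"
      unfolding X_def
    proof (rule set_integral_mono[OF iX i_prod])
      fix z assume "z \<in> I"
      have "(\<Phi>N N z)^2 \<le> \<Phi>N N z * \<Phi> z" unfolding \<Phi>N_def by (rule clamp_prod) simp
      then show "p z * (\<Phi>N N z)^2 \<le> p z * \<Phi>N N z * \<Phi> z"
        using p_nonneg[OF \<open>z \<in> I\<close>] by (simp add: mult_left_mono mult.assoc)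
    qed
    also have "(LINT z:I|lborel. p z * \<Phi>N N z * \<Phi> z) = (LINT z:I|lborel. p z * \<psi> z * \<Phi> z) + mN * E\<Phi>"
    proof -
      have "(LINT z:I|lborel. p z * \<psi> z * \<Phi> z) = (LINT z:I|lborel. p z * \<Phi>N N z * \<Phi> z - mN * (p z * \<Phi> z))"
        unfolding \<psi>_def by (simp add: algebra_simps)
      also have "\<dots> = (LINT z:I|lborel. p z * \<Phi>N N z * \<Phi> z) - mN * E\<Phi>"
        using i_prod i\<Phi> by (simp add: set_integral_diff E\<Phi>_def)
      finally show ?thesis by simp
    qed
    also have "(LINT z:I|lborel. p z * \<psi> z * \<Phi> z) = - Y" using F(3) unfolding Y_def \<Phi>_def .
    also have "- Y + mN * E\<Phi> \<le> \<bar>Y\<bar> + E1^2"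
    proof -
      have "\<bar>mN * E\<Phi>\<bar> \<le> E1 * E1" unfolding abs_mult by (rule mult_mono[OF mNb EPhi]) (use E1_0 in auto)
      then show ?thesis by (simp add: power2_eq_square)
    qed
    finally have "X N \<le> \<bar>Y\<bar> + E1^2" .
    then show ?thesis using arith1[OF _ Y2' a0 _ abs_ge_zero] by simp
  qed
  define fn where "fn = (\<lambda>N x. indicator I x * (p x * (\<Phi>N N x)^2))"
  have h1: "integrable lborel (fn N)" for N
  proof -
    have "\<bar>\<Phi>N N z\<bar> \<le> real N" for z unfolding \<Phi>N_def by (rule clamp_bnd) simp
    from L2wD(2)[OF bdd_L2w[OF \<Phi>Nm this]] show ?thesis unfolding fn_def set_integrable_def by simp
  qed
  have h2: "AE x in lborel. mono (\<lambda>N. fn N x)"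
  proof (rule AE_I2, rule incseq_SucI)
    fix x N
    show "fn N x \<le> fn (Suc N) x"
    proof (cases "x \<in> I")
      case True
      have "(\<Phi>N N x)^2 \<le> (\<Phi>N (Suc N) x)^2" unfolding \<Phi>N_def by (rule clamp_mono_sq) auto
      then show ?thesis using True p_nonneg[OF True] by (simp add: fn_def mult_left_mono)
    qed (simp add: fn_def)
  qed
  have h3: "AE x in lborel. (\<lambda>N. fn N x) \<longlonglongrightarrow> indicator I x * (p x * (\<Phi> x)^2)"
  proof (rule AE_I2)
    fix x
    obtain N0 :: nat where N0: "\<bar>\<Phi> x\<bar> \<le> real N0" using real_arch_simple by blast
    have "fn N x = indicator I x * (p x * (\<Phi> x)^2)" if "N0 \<le> N" for N
    proof -
      have "\<bar>\<Phi> x\<bar> \<le> real N" using N0 that by (meson of_nat_le_iff order_trans)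
      then show ?thesis by (simp add: fn_def \<Phi>N_def clamp_id)
    qed
    then show "(\<lambda>N. fn N x) \<longlonglongrightarrow> indicator I x * (p x * (\<Phi> x)^2)"
      by (intro tendsto_eventually eventually_sequentiallyI)
  qed
  have h4: "(\<lambda>x. indicator I x * (p x * (\<Phi> x)^2)) \<in> borel_measurable lborel" by measurable
  have h5: "integral\<^sup>L lborel (fn N) \<le> a + 2 * E1^2" for N
    using XN[of N] unfolding X_def fn_def set_lebesgue_integral_def by simp
  note mb = mono_bound_integrable[OF h1 h2 h3 h4 h5]
  show "Phi f \<in> L2w I p"
    using mb(1) unfolding L2w_def set_integrable_def \<Phi>_def by simp
  show "nrm2 I p (Phi f) \<le> C * nrm2 I q f + 2 * (LINT z:I|lborel. \<bar>p z * Phi f z\<bar>)^2"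
    using mb(2) unfolding nrm2_def set_lebesgue_integral_def a_def E1_def \<Phi>_def by (simp add: mult.commute)
qed

end

context setting begin

lemma L2_diff:
  assumes u2: "u \<in> L2w I p" and v2: "v \<in> L2w I p"
  shows "(\<lambda>z. u z - v z) \<in> L2w I p"
proof -
  have um[measurable]: "u \<in> borel_measurable borel" using L2wD[OF u2] by simp
  have vm[measurable]: "v \<in> borel_measurable borel" using L2wD[OF v2] by simp
  have "set_integrable lborel I (\<lambda>z. 2 * (p z * (u z)^2) + 2 * (p z * (v z)^2))"
    using L2wD(2)[OF u2] L2wD(2)[OF v2] by (intro set_integral_add) auto
  then have "set_integrable lborel I (\<lambda>z. p z * (u z - v z)^2)"
  proof (rule set_integrable_bound)
    show "set_borel_measurable lborel I (\<lambda>z. p z * (u z - v z)^2)"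
      unfolding set_borel_measurable_def by measurable
    show "AE z in lborel. z \<in> I \<longrightarrow> norm (p z * (u z - v z)^2) \<le> norm (2 * (p z * (u z)^2) + 2 * (p z * (v z)^2))"
    proof (rule AE_I2, rule impI)
      fix z assume z: "z \<in> I"
      have h0: "0 \<le> (u z + v z)^2" by simp
      have "(u z - v z)^2 = 2 * (u z)^2 + 2 * (v z)^2 - (u z + v z)^2" by (simp add: power2_eq_square algebra_simps)
      then have "(u z - v z)^2 \<le> 2 * (u z)^2 + 2 * (v z)^2" using h0 by linarith
      then have "p z * (u z - v z)^2 \<le> p z * (2 * (u z)^2 + 2 * (v z)^2)"
        using p_nonneg[OF z] by (rule mult_left_mono)
      then show "norm (p z * (u z - v z)^2) \<le> norm (2 * (p z * (u z)^2) + 2 * (p z * (v z)^2))"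
        using p_nonneg[OF z] by (simp add: algebra_simps)
    qed
  qed
  then show ?thesis unfolding L2w_def by simp
qed

lemma L2_const: "(\<lambda>z. k) \<in> L2w I p"
  by (rule bdd_L2w[of _ "\<bar>k\<bar>"]) auto

lemma Hs_diff:
  assumes "set_integrable lborel I (\<lambda>z. p z * u z)" "set_integrable lborel I (\<lambda>z. p z * v z)"
  shows "Hs (\<lambda>z. u z - v z) x = Hs u x - Hs v x"
proof -
  have s: "{z\<in>I. z \<le> x} \<in> sets lborel" "{z\<in>I. z \<le> x} \<subseteq> I" by auto
  have a: "set_integrable lborel {z\<in>I. z \<le> x} (\<lambda>z. p z * u z)" using set_integrable_subset[OF assms(1) s] .
  have b: "set_integrable lborel {z\<in>I. z \<le> x} (\<lambda>z. p z * v z)" using set_integrable_subset[OF assms(2) s] .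
  show ?thesis unfolding Hs_def using set_integral_diff(2)[OF a b] by (simp add: algebra_simps)
qed

lemma Hs_const: "Hs (\<lambda>z. k) x = k * cdf I p x"
  unfolding Hs_def cdf_def by (simp add: mult.commute)

lemma IDL:
  assumes f2: "f \<in> L2w I q"
  shows "(LINT y:I|lborel. kern I p x y * f y) = cdf I p x * (LINT z:I|lborel. p z * Phi f z) - Hs (Phi f) x"
proof -
  have fm[measurable]: "f \<in> borel_measurable borel" using L2wD[OF f2] by simp
  have i\<Phi>: "set_integrable lborel I (\<lambda>z. p z * Phi f z)" by (rule PhiL1(1)[OF f2])
  have ichi: "set_integrable lborel I (\<lambda>z. p z * chi x z)" by (rule L2_L1[OF chi_L2])
  note F = F0[OF fm chi_meas ichi chi_mean0 IF_bdd[OF f2 chi_meas chi_bnd]]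
  have i1: "set_integrable lborel I (\<lambda>z. p z * (if z \<le> x then 1 else 0) * Phi f z)"
  proof -
    have "set_integrable lborel {z\<in>I. z \<le> x} (\<lambda>z. p z * Phi f z)"
      by (rule set_integrable_subset[OF i\<Phi>]) auto
    moreover have "(\<lambda>z. indicator {z\<in>I. z \<le> x} z *\<^sub>R (p z * Phi f z)) = (\<lambda>z. indicator I z *\<^sub>R (p z * (if z \<le> x then 1 else 0) * Phi f z))"
      by (auto simp: indicator_def fun_eq_iff)
    ultimately show ?thesis unfolding set_integrable_def by simp
  qed
  have e1: "(LINT z:I|lborel. p z * (if z \<le> x then 1 else 0) * Phi f z) = Hs (Phi f) x"
    unfolding Hs_def set_lebesgue_integral_def
    by (rule Bochner_Integration.integral_cong) (auto simp: indicator_def)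
  have "(LINT z:I|lborel. p z * chi x z * Phi f z) =
      (LINT z:I|lborel. p z * (if z \<le> x then 1 else 0) * Phi f z - cdf I p x * (p z * Phi f z))"
    unfolding chi_def by (simp add: algebra_simps)
  also have "\<dots> = Hs (Phi f) x - cdf I p x * (LINT z:I|lborel. p z * Phi f z)"
    using i1 i\<Phi> by (simp add: set_integral_diff e1)
  finally have "Hs (Phi f) x - cdf I p x * (LINT z:I|lborel. p z * Phi f z) = - (LINT t:I|lborel. f t * kern I p x t)"
    using F(3) by (simp add: Hs_chi)
  then show ?thesis by (simp add: mult.commute)
qed

end

context setting begin

lemma Ltilde_meas[measurable]:
  assumes [measurable]: "f \<in> borel_measurable borel"
  shows "Ltilde I p w f \<in> borel_measurable borel"
  unfolding Ltilde_def kern_def set_lebesgue_integral_def by measurable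

definition Gf where "Gf f = (\<lambda>z. (LINT y:I|lborel. p y * Phi f y) - Phi f z)"

lemma Gf_props:
  assumes f2: "f \<in> L2w I q"
  shows "Gf f \<in> L2w I p" "(LINT z:I|lborel. p z * Gf f z) = 0" "\<And>x. Ltilde I p w f x = T (Gf f) x"
proof -
  have i\<Phi>: "set_integrable lborel I (\<lambda>z. p z * Phi f z)" by (rule PhiL1(1)[OF f2])
  define E where "E = (LINT y:I|lborel. p y * Phi f y)"
  show "Gf f \<in> L2w I p" unfolding Gf_def by (rule L2_diff[OF L2_const PhiL2(1)[OF f2]])
  have "(LINT z:I|lborel. p z * Gf f z) = (LINT z:I|lborel. E * p z - p z * Phi f z)"
    unfolding Gf_def E_def by (simp add: algebra_simps)
  also have "\<dots> = E * 1 - E" using p_int i\<Phi> by (simp add: set_integral_diff p_prob E_def)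
  finally show "(LINT z:I|lborel. p z * Gf f z) = 0" by simp
  fix x
  have "Hs (Gf f) x = Hs (\<lambda>z. E) x - Hs (Phi f) x"
    unfolding Gf_def E_def[symmetric] by (rule Hs_diff) (use p_int i\<Phi> in auto)
  also have "\<dots> = (LINT y:I|lborel. kern I p x y * f y)"
    unfolding Hs_const IDL[OF f2] E_def by (simp add: mult.commute)
  finally show "Ltilde I p w f x = T (Gf f) x"
    unfolding Ltilde_def T_def q_def by simp
qed

lemma main1:
  assumes f2: "f \<in> L2w I q"
  shows "Ltilde I p w f \<in> L2w I q"
proof -
  have fm[measurable]: "f \<in> borel_measurable borel" using L2wD[OF f2] by simp
  note G = Gf_props[OF f2]
  have "set_integrable lborel I (\<lambda>x. q x * (T (Gf f) x)^2)" by (rule TB(1)[OF G(1) G(2)])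
  then show ?thesis unfolding L2w_def G(3)[symmetric] by simp
qed


lemma T_diff:
  assumes "set_integrable lborel I (\<lambda>z. p z * u z)" "set_integrable lborel I (\<lambda>z. p z * v z)"
  shows "T u x - T v x = T (\<lambda>z. u z - v z) x"
  unfolding T_def Hs_diff[OF assms] by (simp add: diff_divide_distrib)

lemma center:
  assumes u2: "u \<in> L2w I p"
  defines "v \<equiv> (\<lambda>z. (LINT y:I|lborel. p y * u y) - u z)"
  shows "v \<in> L2w I p" "(LINT z:I|lborel. p z * v z) = 0" "nrm2 I p v \<le> nrm2 I p u"
proof -
  have iu: "set_integrable lborel I (\<lambda>z. p z * u z)" by (rule L2_L1[OF u2])
  define E where "E = (LINT y:I|lborel. p y * u y)"
  show "v \<in> L2w I p" unfolding v_def by (rule L2_diff[OF L2_const u2])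
  have "(LINT z:I|lborel. p z * v z) = (LINT z:I|lborel. E * p z - p z * u z)"
    unfolding v_def E_def by (simp add: algebra_simps)
  also have "\<dots> = E * 1 - E" using p_int iu by (simp add: set_integral_diff p_prob E_def)
  finally show "(LINT z:I|lborel. p z * v z) = 0" by simp
  have "nrm2 I p v = (LINT x:I|lborel. p x * (u x - E)^2)"
    unfolding nrm2_def v_def E_def by (simp add: power2_commute)
  also have "\<dots> = var_p I p u" unfolding E_def by (rule var_shift(2)[OF u2])
  also have "\<dots> \<le> nrm2 I p u" unfolding var_p_def nrm2_def by simp
  finally show "nrm2 I p v \<le> nrm2 I p u" .
qed

lemma main2:
  fixes fs :: "nat \<Rightarrow> real \<Rightarrow> real" and M :: real
  assumes cinj: "\<forall>(hs::nat \<Rightarrow> real \<Rightarrow> real) gs M. (\<forall>n. H1 I p w (hs n) (gs n) \<and>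
                          nrm2 I p (hs n) + nrm2 I q (gs n) \<le> M) \<longrightarrow>
                       (\<exists>r f. strict_mono r \<and> f \<in> L2w I p \<and>
                          (\<lambda>n. nrm2 I p (\<lambda>x. hs (r n) x - f x)) \<longlonglongrightarrow> 0)"
    and fs: "\<forall>n. fs n \<in> L2w I q \<and> nrm2 I q (fs n) \<le> M"
  shows "\<exists>r g. strict_mono r \<and> g \<in> L2w I q \<and>
             (\<lambda>n. nrm2 I q (\<lambda>x. Ltilde I p w (fs (r n)) x - g x)) \<longlonglongrightarrow> 0"
proof -
  have f2: "fs n \<in> L2w I q" for n using fs by blast
  have fM: "nrm2 I q (fs n) \<le> M" for n using fs by blast
  have fsm[measurable]: "fs n \<in> borel_measurable borel" for n using L2wD[OF f2] by simp
  have M0: "M \<ge> 0" using nrm2q_nonneg[OF fsm[of 0]] fM[of 0] by simp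
  define K0 where "K0 = C * nrm2 I p (chi c)"
  have K00: "K0 \<ge> 0" unfolding K0_def using C_nonneg nrm2_nonneg by simp
  define \<Phi> where "\<Phi> = (\<lambda>n. Phi (fs n))"
  define M' where "M' = C * M + 2 * (M * K0 / kap^2) + M"
  have H1n: "H1 I p w (\<Phi> n) (fs n)" for n
  proof -
    have "loc_integrable I (fs n)" using H2 f2[of n] unfolding q_eq by blast
    then show ?thesis
      unfolding H1_def \<Phi>_def q_eq using PhiL2(1)[OF f2] Phi_weak[OF fsm] f2 by blast
  qed
  have bnd: "nrm2 I p (\<Phi> n) + nrm2 I q (fs n) \<le> M'" for n
  proof -
    define E1 where "E1 = (LINT z:I|lborel. \<bar>p z * Phi (fs n) z\<bar>)"
    define X where "X = (LINT t:I|lborel. \<bar>fs n t\<bar> * kern I p c t)"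
    have E10: "E1 \<ge> 0" unfolding E1_def by (rule set_int_nonneg) simp
    have X0: "X \<ge> 0" unfolding X_def
      by (rule set_int_nonneg) (use cdf_nonneg cdf_le1 in \<open>auto simp: kern_def\<close>)
    have E1X: "E1 \<le> X / kap" unfolding E1_def X_def by (rule PhiL1(2)[OF f2])
    have X2: "X^2 \<le> M * K0"
    proof -
      have "X^2 \<le> nrm2 I q (fs n) * K0" unfolding X_def K0_def by (rule S1(2)[OF f2])
      also have "\<dots> \<le> M * K0" by (rule mult_right_mono[OF fM K00])
      finally show ?thesis .
    qed
    have "E1^2 \<le> (X / kap)^2" by (rule power_mono[OF E1X E10])
    also have "\<dots> = X^2 / kap^2" by (simp add: power_divide)
    also have "\<dots> \<le> M * K0 / kap^2" using X2 by (simp add: divide_right_mono)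
    finally have E12: "E1^2 \<le> M * K0 / kap^2" .
    have "nrm2 I p (\<Phi> n) \<le> C * nrm2 I q (fs n) + 2 * E1^2"
      unfolding \<Phi>_def E1_def by (rule PhiL2(2)[OF f2])
    also have "\<dots> \<le> C * M + 2 * (M * K0 / kap^2)"
      using E12 mult_left_mono[OF fM[of n] C_nonneg] by linarith
    finally show ?thesis using fM[of n] unfolding M'_def by simp
  qed
  obtain r g0 where r: "strict_mono r" and g02: "g0 \<in> L2w I p"
    and conv: "(\<lambda>n. nrm2 I p (\<lambda>x. \<Phi> (r n) x - g0 x)) \<longlonglongrightarrow> 0"
    using cinj[rule_format, of \<Phi> fs M'] H1n bnd by blast
  have g0m[measurable]: "g0 \<in> borel_measurable borel" using L2wD[OF g02] by simp
  define g1 where "g1 = (\<lambda>z. (LINT y:I|lborel. p y * g0 y) - g0 z)"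
  have g1c: "g1 \<in> L2w I p" "(LINT z:I|lborel. p z * g1 z) = 0"
    using center[OF g02] unfolding g1_def by auto
  have g1m[measurable]: "g1 \<in> borel_measurable borel" using L2wD[OF g1c(1)] by simp
  define g where "g = T g1"
  have g2: "g \<in> L2w I q"
    using TB(1)[OF g1c(1) g1c(2)] unfolding L2w_def g_def by simp
  have \<Phi>2: "\<Phi> n \<in> L2w I p" for n unfolding \<Phi>_def by (rule PhiL2(1)[OF f2])
  define D where "D = (\<lambda>n x. \<Phi> (r n) x - g0 x)"
  have D2: "D n \<in> L2w I p" for n unfolding D_def by (rule L2_diff[OF \<Phi>2 g02])
  define \<psi> where "\<psi> = (\<lambda>n z. (LINT y:I|lborel. p y * D n y) - D n z)"
  have \<psi>c: "\<psi> n \<in> L2w I p" "(LINT z:I|lborel. p z * \<psi> n z) = 0" "nrm2 I p (\<psi> n) \<le> nrm2 I p (D n)" for n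
    using center[OF D2[of n]] unfolding \<psi>_def by auto
  have key: "Ltilde I p w (fs (r n)) x - g x = T (\<psi> n) x" for n x
  proof -
    have iG: "set_integrable lborel I (\<lambda>z. p z * Gf (fs (r n)) z)" by (rule L2_L1[OF Gf_props(1)[OF f2]])
    have ig1: "set_integrable lborel I (\<lambda>z. p z * g1 z)" by (rule L2_L1[OF g1c(1)])
    have i\<Phi>: "set_integrable lborel I (\<lambda>z. p z * \<Phi> (r n) z)" by (rule L2_L1[OF \<Phi>2])
    have ig0: "set_integrable lborel I (\<lambda>z. p z * g0 z)" by (rule L2_L1[OF g02])
    have ED: "(LINT y:I|lborel. p y * D n y) = (LINT y:I|lborel. p y * \<Phi> (r n) y) - (LINT y:I|lborel. p y * g0 y)"
    proof -
      have "(LINT y:I|lborel. p y * D n y) = (LINT y:I|lborel. p y * \<Phi> (r n) y - p y * g0 y)"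
        unfolding D_def by (simp add: right_diff_distrib)
      also have "\<dots> = (LINT y:I|lborel. p y * \<Phi> (r n) y) - (LINT y:I|lborel. p y * g0 y)"
        by (rule set_integral_diff(2)[OF i\<Phi> ig0])
      finally show ?thesis .
    qed
    have fe: "(\<lambda>z. Gf (fs (r n)) z - g1 z) = \<psi> n"
    proof
      fix z
      show "Gf (fs (r n)) z - g1 z = \<psi> n z"
        unfolding \<psi>_def ED unfolding Gf_def g1_def D_def \<Phi>_def by simp
    qed
    have "Ltilde I p w (fs (r n)) x - g x = T (Gf (fs (r n))) x - T g1 x"
      unfolding g_def Gf_props(3)[OF f2] ..
    also have "\<dots> = T (\<lambda>z. Gf (fs (r n)) z - g1 z) x" by (rule T_diff[OF iG ig1])
    finally show ?thesis unfolding fe .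
  qed
  have ub: "nrm2 I q (\<lambda>x. Ltilde I p w (fs (r n)) x - g x) \<le> C * nrm2 I p (D n)" for n
  proof -
    have "nrm2 I q (\<lambda>x. Ltilde I p w (fs (r n)) x - g x) = (LINT x:I|lborel. q x * (T (\<psi> n) x)^2)"
      unfolding nrm2_def key ..
    also have "\<dots> \<le> C * nrm2 I p (\<psi> n)" by (rule TB(2)[OF \<psi>c(1) \<psi>c(2)])
    also have "\<dots> \<le> C * nrm2 I p (D n)" by (rule mult_left_mono[OF \<psi>c(3) C_nonneg])
    finally show ?thesis .
  qed
  have lb: "0 \<le> nrm2 I q (\<lambda>x. Ltilde I p w (fs (r n)) x - g x)" for n
    unfolding g_def by (intro nrm2q_nonneg) measurable
  have "(\<lambda>n. C * nrm2 I p (D n)) \<longlonglongrightarrow> C * 0"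
    by (rule tendsto_mult_left) (use conv in \<open>simp add: D_def\<close>)
  then have lim0: "(\<lambda>n. C * nrm2 I p (D n)) \<longlonglongrightarrow> 0" by simp
  have ev1: "eventually (\<lambda>n. 0 \<le> nrm2 I q (\<lambda>x. Ltilde I p w (fs (r n)) x - g x)) sequentially"
    using lb by simp
  have ev2: "eventually (\<lambda>n. nrm2 I q (\<lambda>x. Ltilde I p w (fs (r n)) x - g x) \<le> C * nrm2 I p (D n)) sequentially"
    using ub by simp
  have "(\<lambda>n. nrm2 I q (\<lambda>x. Ltilde I p w (fs (r n)) x - g x)) \<longlonglongrightarrow> 0"
    by (rule tendsto_sandwich[OF ev1 ev2 tendsto_const lim0])
  then show ?thesis using r g2 by blast
qed

end

theorem proposition2p12:
  fixes a b :: ereal and p w :: "real \<Rightarrow> real"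
  defines "I \<equiv> ival a b"
  assumes ab: "a < b"
    and p_meas: "p \<in> borel_measurable lborel"
    and p_nonneg: "\<forall>x\<in>I. p x \<ge> 0"
    and p_int: "set_integrable lborel I p"
    and p_prob: "(LINT x:I|lborel. p x) = 1"
    and p_pos: "AE x in lborel. x \<in> I \<longrightarrow> p x > 0"
    and w_meas: "w \<in> borel_measurable lborel"
    and w_loc: "loc_integrable I w"
    and w_pos: "AE x in lborel. x \<in> I \<longrightarrow> w x > 0"
    and pw_loc: "loc_integrable I (\<lambda>x. p x * w x)"
    and H1: "poincare_const I p w < \<infinity>"
    and H2: "\<forall>f \<in> L2w I (\<lambda>x. p x * w x). loc_integrable I f"
    and dense: "\<forall>f \<in> L2w I p. \<forall>e>0. \<exists>h g. H1 I p w h g \<and> nrm2 I p (\<lambda>x. f x - h x) < e"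
    and compact_inj: "\<forall>(hs::nat \<Rightarrow> real \<Rightarrow> real) gs M. (\<forall>n. H1 I p w (hs n) (gs n) \<and>
                          nrm2 I p (hs n) + nrm2 I (\<lambda>x. p x * w x) (gs n) \<le> M) \<longrightarrow>
                       (\<exists>r f. strict_mono r \<and> f \<in> L2w I p \<and>
                          (\<lambda>n. nrm2 I p (\<lambda>x. hs (r n) x - f x)) \<longlonglongrightarrow> 0)"
  shows "(\<forall>f \<in> L2w I (\<lambda>x. p x * w x). Ltilde I p w f \<in> L2w I (\<lambda>x. p x * w x))
     \<and> (\<forall>(fs::nat \<Rightarrow> real \<Rightarrow> real) M. (\<forall>n. fs n \<in> L2w I (\<lambda>x. p x * w x) \<and> nrm2 I (\<lambda>x. p x * w x) (fs n) \<le> M) \<longrightarrow>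
          (\<exists>r g. strict_mono r \<and> g \<in> L2w I (\<lambda>x. p x * w x) \<and>
             (\<lambda>n. nrm2 I (\<lambda>x. p x * w x) (\<lambda>x. Ltilde I p w (fs (r n)) x - g x)) \<longlonglongrightarrow> 0))"
proof -
  define S where "S = {ereal C | C. C \<ge> 0 \<and>
     (\<forall>h g. H1 I p w h g \<longrightarrow> var_p I p h \<le> C * nrm2 I (\<lambda>x. p x * w x) g)}"
  have "S \<noteq> {}"
  proof
    assume "S = {}"
    then have "poincare_const I p w = \<infinity>" unfolding poincare_const_def S_def[symmetric] by (simp add: top_ereal_def)
    then show False using H1 by simp
  qed
  then obtain C where C0: "C \<ge> 0" and poinc: "\<forall>h g. H1 I p w h g \<longrightarrow> var_p I p h \<le> C * nrm2 I (\<lambda>x. p x * w x) g"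
    unfolding S_def by blast
  obtain c where c: "a < ereal c" "ereal c < b" using ereal_dense2[OF ab] by blast
  then have cI: "c \<in> I" unfolding I_def ival_def by simp
  interpret S: setting I p w C c
  proof
    show "open I" unfolding I_def by (rule ival_open)
    show "\<And>x y z. x \<in> I \<Longrightarrow> y \<in> I \<Longrightarrow> x \<le> z \<Longrightarrow> z \<le> y \<Longrightarrow> z \<in> I" unfolding I_def by (rule ival_conv)
    show "p \<in> borel_measurable borel" using p_meas by simp
    show "\<And>x. x \<in> I \<Longrightarrow> 0 \<le> p x" using p_nonneg by blast
    show "set_integrable lborel I p" by (rule p_int)
    show "(LINT x:I|lborel. p x) = 1" by (rule p_prob)
    show "AE x in lborel. x \<in> I \<longrightarrow> 0 < p x" by (rule p_pos)
    show "w \<in> borel_measurable borel" using w_meas by simp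
    show "AE x in lborel. x \<in> I \<longrightarrow> 0 < w x" by (rule w_pos)
    show "\<And>f. f \<in> L2w I (\<lambda>x. p x * w x) \<Longrightarrow> loc_integrable I f" using H2 by blast
    show "C \<ge> 0" by (rule C0)
    show "\<And>h g. H1 I p w h g \<Longrightarrow> var_p I p h \<le> C * nrm2 I (\<lambda>x. p x * w x) g" using poinc by blast
    show "c \<in> I" by (rule cI)
  qed
  show ?thesis
  proof (intro conjI ballI allI impI)
    fix f assume "f \<in> L2w I (\<lambda>x. p x * w x)"
    then show "Ltilde I p w f \<in> L2w I (\<lambda>x. p x * w x)" unfolding S.q_eq by (rule S.main1)
  next
    fix fs :: "nat \<Rightarrow> real \<Rightarrow> real" and M :: real
    assume "\<forall>n. fs n \<in> L2w I (\<lambda>x. p x * w x) \<and> nrm2 I (\<lambda>x. p x * w x) (fs n) \<le> M"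
    then show "\<exists>r g. strict_mono r \<and> g \<in> L2w I (\<lambda>x. p x * w x) \<and>
             (\<lambda>n. nrm2 I (\<lambda>x. p x * w x) (\<lambda>x. Ltilde I p w (fs (r n)) x - g x)) \<longlonglongrightarrow> 0"
      unfolding S.q_eq using S.main2[OF compact_inj[unfolded S.q_eq]] by blast
  qed
qed

end
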